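(* Let $\mathcal{R}$ be the Ramond-Block algebra with parameter $q\in\mathbb{C}^*$. Let $\lambda,\mu\in\mathbb{C}^*$ and $a,a',b,b'\in\mathbb{C}$. Then: (1) the $\mathbb{Z}_2$-graded space $\Omega_{\mathcal{R}}(\lambda,a,b)=\mathbb{C}[t^2]\oplus t\mathbb{C}[t^2]$ with the action described in the context is an $\mathcal{R}$-module; (2) $\Omega_{\mathcal{R}}(\lambda,a,b)$ is simple if and only if $a\neq 0$ or $b\neq 0$; (3) $\Omega_{\mathcal{R}}(\lambda,a,b)\cong\Omega_{\mathcal{R}}(\mu,a',b')$ as $\mathcal{R}$-modules if and only if $\lambda=\mu$, $a=a'$ and $b=b'$; (4) any $\mathcal{R}$-module which is free of rank $1$ as a $U(\eta)$-module, where $\eta=\mathbb{C}L_{0,0}\oplus\mathbb{C}G_{0,0}$, is isomorphic to $\Omega_{\mathcal{R}}(\lambda,a,b)$ for some $\lambda\in\mathbb{C}^*$ and $a,b\in\mathbb{C}$.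
   Context: Fix $q\in\mathbb{C}^*$. The Ramond-Block algebra $\mathcal{R}$ is the Lie superalgebra over $\mathbb{C}$ whose even part has basis $\{L_{m,i}\mid m\in\mathbb{Z}, i\in\mathbb{Z}_+\}$ and whose odd part has basis $\{G_{l,j}\mid l\in\mathbb{Z}, j\in\mathbb{Z}_+\}$ (here $\mathbb{Z}_+=\{0,1,2,\dots\}$), with brackets $[L_{m,i},L_{n,j}]=(n(i+q)-m(j+q))L_{m+n,i+j}$, $[L_{m,i},G_{l,j}]=(l(i+q)-m(j+\frac{q}{2}))G_{m+l,i+j}$, $[G_{l,i},G_{r,j}]=2qL_{l+r,i+j}$. All modules are supermodules (odd elements shift parity). $U(\eta)$ is the universal enveloping algebra of $\eta$. For $\lambda\in\mathbb{C}^*$, $a,b\in\mathbb{C}$, $\Omega_{\mathcal{R}}(\lambda,a,b)=\mathbb{C}[t^2]\oplus t\mathbb{C}[t^2]$ has even part $\mathbb{C}[t^2]$ and odd part $t\mathbb{C}[t^2]$, with action, for $f\in\mathbb{C}[t^2]$, $m\in\mathbb{Z}$, $i\in\mathbb{Z}_+$ ($\delta$ the Kronecker delta): $L_{m,i}f(t^2)=\lambda^m(\delta_{i,0}(t^2-mqa)+\delta_{q,-1}\delta_{i,1}b)f(t^2-mq)$, $L_{m,i}tf(t^2)=\lambda^m t(\delta_{i,0}(t^2-mqa-\frac{mq}{2})+\delta_{q,-1}\delta_{i,1}b)f(t^2-mq)$, $G_{m,i}f(t^2)=\lambda^m\delta_{i,0}tf(t^2-mq)$, $G_{m,i}tf(t^2)=q\lambda^m(\delta_{i,0}(t^2-2mqa)+2\delta_{q,-1}\delta_{i,1}b)f(t^2-mq)$.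 *)

theory Defs
  imports "HOL-Computational_Algebra.Polynomial" "HOL-Library.Product_Plus" Complex_Main
begin

datatype rb_basis = L int nat | G int nat

definition cvs :: "(complex \<Rightarrow> 'v::ab_group_add \<Rightarrow> 'v) \<Rightarrow> bool" where
  "cvs smul \<longleftrightarrow>
     (\<forall>c x y. smul c (x + y) = smul c x + smul c y) \<and>
     (\<forall>c d x. smul (c + d) x = smul c x + smul d x) \<and>
     (\<forall>c d x. smul c (smul d x) = smul (c * d) x) \<and>
     (\<forall>x. smul 1 x = x)"

definition subspace_of :: "(complex \<Rightarrow> 'v::ab_group_add \<Rightarrow> 'v) \<Rightarrow> 'v set \<Rightarrow> bool" where
  "subspace_of smul W \<longleftrightarrow> 0 \<in> W \<and> (\<forall>x\<in>W. \<forall>y\<in>W. x + y \<in> W) \<and> (\<forall>c. \<forall>x\<in>W. smul c x \<in> W)"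

definition super_vs :: "(complex \<Rightarrow> 'v::ab_group_add \<Rightarrow> 'v) \<Rightarrow> 'v set \<Rightarrow> 'v set \<Rightarrow> bool" where
  "super_vs smul V0 V1 \<longleftrightarrow> cvs smul \<and> subspace_of smul V0 \<and> subspace_of smul V1 \<and>
     V0 \<inter> V1 = {0} \<and> (\<forall>x. \<exists>x0\<in>V0. \<exists>x1\<in>V1. x = x0 + x1)"

definition clinear_map :: "(complex \<Rightarrow> 'v::ab_group_add \<Rightarrow> 'v) \<Rightarrow> (complex \<Rightarrow> 'w::ab_group_add \<Rightarrow> 'w)
     \<Rightarrow> ('v \<Rightarrow> 'w) \<Rightarrow> bool" where
  "clinear_map smul smul' f \<longleftrightarrow> (\<forall>x y. f (x + y) = f x + f y) \<and> (\<forall>c x. f (smul c x) = smul' c (f x))"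

definition cLL :: "complex \<Rightarrow> int \<Rightarrow> nat \<Rightarrow> int \<Rightarrow> nat \<Rightarrow> complex" where
  "cLL q m i n j = of_int n * (of_nat i + q) - of_int m * (of_nat j + q)"

definition cLG :: "complex \<Rightarrow> int \<Rightarrow> nat \<Rightarrow> int \<Rightarrow> nat \<Rightarrow> complex" where
  "cLG q m i l j = of_int l * (of_nat i + q) - of_int m * (of_nat j + q / 2)"

text \<open>This is the same as a module over the Lie superalgebra R, since R has the given basis.\<close>
definition R_module :: "complex \<Rightarrow> (complex \<Rightarrow> 'v::ab_group_add \<Rightarrow> 'v) \<Rightarrow> 'v set \<Rightarrow> 'v set
     \<Rightarrow> (rb_basis \<Rightarrow> 'v \<Rightarrow> 'v) \<Rightarrow> bool" where
  "R_module q smul V0 V1 act \<longleftrightarrow>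
     super_vs smul V0 V1 \<and>
     (\<forall>x. clinear_map smul smul (act x)) \<and>
     (\<forall>m i. act (L m i) ` V0 \<subseteq> V0 \<and> act (L m i) ` V1 \<subseteq> V1) \<and>
     (\<forall>m i. act (G m i) ` V0 \<subseteq> V1 \<and> act (G m i) ` V1 \<subseteq> V0) \<and>
     (\<forall>m i n j v. act (L m i) (act (L n j) v) - act (L n j) (act (L m i) v)
                    = smul (cLL q m i n j) (act (L (m + n) (i + j)) v)) \<and>
     (\<forall>m i l j v. act (L m i) (act (G l j) v) - act (G l j) (act (L m i) v)
                    = smul (cLG q m i l j) (act (G (m + l) (i + j)) v)) \<and>
     (\<forall>l i r j v. act (G l i) (act (G r j) v) + act (G r j) (act (G l i) v)
                    = smul (2 * q) (act (L (l + r) (i + j)) v))"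

definition R_submodule :: "(complex \<Rightarrow> 'v::ab_group_add \<Rightarrow> 'v) \<Rightarrow> 'v set \<Rightarrow> 'v set
     \<Rightarrow> (rb_basis \<Rightarrow> 'v \<Rightarrow> 'v) \<Rightarrow> 'v set \<Rightarrow> bool" where
  "R_submodule smul V0 V1 act W \<longleftrightarrow>
     subspace_of smul W \<and> (\<forall>x. \<forall>w\<in>W. act x w \<in> W) \<and>
     (\<forall>w\<in>W. \<exists>w0\<in>W \<inter> V0. \<exists>w1\<in>W \<inter> V1. w = w0 + w1)"

definition R_simple :: "complex \<Rightarrow> (complex \<Rightarrow> 'v::ab_group_add \<Rightarrow> 'v) \<Rightarrow> 'v set \<Rightarrow> 'v set
     \<Rightarrow> (rb_basis \<Rightarrow> 'v \<Rightarrow> 'v) \<Rightarrow> bool" where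
  "R_simple q smul V0 V1 act \<longleftrightarrow> R_module q smul V0 V1 act \<and> (\<exists>v::'v. v \<noteq> 0) \<and>
     (\<forall>W. R_submodule smul V0 V1 act W \<longrightarrow> W = {0} \<or> W = UNIV)"

definition R_iso :: "(complex \<Rightarrow> 'v::ab_group_add \<Rightarrow> 'v) \<Rightarrow> 'v set \<Rightarrow> 'v set \<Rightarrow> (rb_basis \<Rightarrow> 'v \<Rightarrow> 'v)
     \<Rightarrow> (complex \<Rightarrow> 'w::ab_group_add \<Rightarrow> 'w) \<Rightarrow> 'w set \<Rightarrow> 'w set \<Rightarrow> (rb_basis \<Rightarrow> 'w \<Rightarrow> 'w)
     \<Rightarrow> ('v \<Rightarrow> 'w) \<Rightarrow> bool" where
  "R_iso smul V0 V1 act smul' W0 W1 act' \<phi> \<longleftrightarrow>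
     bij \<phi> \<and> clinear_map smul smul' \<phi> \<and> \<phi> ` V0 \<subseteq> W0 \<and> \<phi> ` V1 \<subseteq> W1 \<and>
     (\<forall>x v. \<phi> (act x v) = act' x (\<phi> v))"

definition R_isomorphic :: "(complex \<Rightarrow> 'v::ab_group_add \<Rightarrow> 'v) \<Rightarrow> 'v set \<Rightarrow> 'v set \<Rightarrow> (rb_basis \<Rightarrow> 'v \<Rightarrow> 'v)
     \<Rightarrow> (complex \<Rightarrow> 'w::ab_group_add \<Rightarrow> 'w) \<Rightarrow> 'w set \<Rightarrow> 'w set \<Rightarrow> (rb_basis \<Rightarrow> 'w \<Rightarrow> 'w) \<Rightarrow> bool" where
  "R_isomorphic smul V0 V1 act smul' W0 W1 act' \<longleftrightarrow> (\<exists>\<phi>. R_iso smul V0 V1 act smul' W0 W1 act' \<phi>)"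

definition is_basis :: "(complex \<Rightarrow> 'v::ab_group_add \<Rightarrow> 'v) \<Rightarrow> ('i \<Rightarrow> 'v) \<Rightarrow> bool" where
  "is_basis smul e \<longleftrightarrow>
     (\<forall>x. \<exists>c. finite {i. c i \<noteq> 0} \<and> x = (\<Sum>i\<in>{i. c i \<noteq> 0}. smul (c i) (e i))) \<and>
     (\<forall>c. finite {i. c i \<noteq> 0} \<and> (\<Sum>i\<in>{i. c i \<noteq> 0}. smul (c i) (e i)) = 0 \<longrightarrow> (\<forall>i. c i = 0))"

text \<open>By PBW, U(eta) has basis L_{0,0}^k G_{0,0}^e (k \<in> N, e \<in> {0,1}).  The module is
  free of rank 1 over U(eta) (on an even generator v) iff u \<mapsto> u v is bijective, i.e.
  iff the vectors L_{0,0}^k G_{0,0}^e v form a basis.\<close>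
definition U_eta_free_rank1 :: "(complex \<Rightarrow> 'v::ab_group_add \<Rightarrow> 'v) \<Rightarrow> 'v set
     \<Rightarrow> (rb_basis \<Rightarrow> 'v \<Rightarrow> 'v) \<Rightarrow> bool" where
  "U_eta_free_rank1 smul V0 act \<longleftrightarrow>
     (\<exists>v\<in>V0. is_basis smul
        (\<lambda>(k::nat, e::bool). (act (L 0 0) ^^ k) (if e then act (G 0 0) v else v)))"

text \<open>Omega = C[t^2] \<oplus> t C[t^2]; the pair (f, g) of polynomials in one variable x
  represents f(t^2) + t g(t^2).  Even part: g = 0; odd part: f = 0.\<close>
type_synonym omega = "complex poly \<times> complex poly"

definition Omega_smul :: "complex \<Rightarrow> omega \<Rightarrow> omega" where
  "Omega_smul c v = (smult c (fst v), smult c (snd v))"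

definition Omega_even :: "omega set" where "Omega_even = {v. snd v = 0}"
definition Omega_odd :: "omega set" where "Omega_odd = {v. fst v = 0}"

definition shift :: "complex \<Rightarrow> complex poly \<Rightarrow> complex poly" where
  "shift c f = pcompose f [:- c, 1:]"

definition kd :: "bool \<Rightarrow> complex" where "kd P = (if P then 1 else 0)"

definition Omega_act :: "complex \<Rightarrow> complex \<Rightarrow> complex \<Rightarrow> complex \<Rightarrow> rb_basis \<Rightarrow> omega \<Rightarrow> omega" where
  "Omega_act q lam a b x v = (case x of
     L m i \<Rightarrow>
       (smult (lam powi m)
          (smult (kd (i = 0)) [:- (of_int m * q * a), 1:] + [: kd (q = -1) * kd (i = 1) * b :])
          * shift (of_int m * q) (fst v),
        smult (lam powi m)
          (smult (kd (i = 0)) [:- (of_int m * q * a) - of_int m * q / 2, 1:] + [: kd (q = -1) * kd (i = 1) * b :])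
          * shift (of_int m * q) (snd v))
   | G m i \<Rightarrow>
       (smult (q * lam powi m)
          (smult (kd (i = 0)) [:- (2 * of_int m * q * a), 1:] + [: 2 * kd (q = -1) * kd (i = 1) * b :])
          * shift (of_int m * q) (snd v),
        smult (lam powi m * kd (i = 0)) (shift (of_int m * q) (fst v))))"

end

theory Submission
  imports Defs "HOL-Computational_Algebra.Fundamental_Theorem_Algebra"
begin

lemma poly_shift[simp]: "poly (shift c p) x = poly p (x - c)"
  by (simp add: shift_def poly_pcompose)

lemma poly_ext_iff: "((p::complex poly) = r) \<longleftrightarrow> (\<forall>x. poly p x = poly r x)"
  using poly_eq_poly_eq_iff[of p r] by (auto simp: fun_eq_iff)

lemma shift_mult: "shift c (p * r) = shift c p * shift c r"
  by (simp add: poly_ext_iff)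
lemma shift_add: "shift c (p + r) = shift c p + shift c r"
  by (simp add: poly_ext_iff)
lemma shift_diff: "shift c (p - r) = shift c p - shift c r"
  by (simp add: poly_ext_iff)
lemma shift_smult: "shift c (smult a p) = smult a (shift c p)"
  by (simp add: poly_ext_iff)
lemma shift_0[simp]: "shift 0 p = p"
  by (simp add: poly_ext_iff)
lemma shift_shift: "shift c (shift d p) = shift (c + d) p"
  by (simp add: poly_ext_iff algebra_simps)
lemma shift_const[simp]: "shift c [:a:] = [:a:]"
  by (simp add: poly_ext_iff)
lemma shift_zero[simp]: "shift c 0 = 0"
  by (simp add: poly_ext_iff)
lemma shift_one[simp]: "shift c 1 = 1"
  by (simp add: poly_ext_iff)
lemma shift_lin[simp]: "shift c [:a, b:] = [:a - b * c, b:]"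
  by (simp add: poly_ext_iff algebra_simps)
lemma degree_shift[simp]: "degree (shift c p) = degree p"
  by (simp add: shift_def degree_pcompose)
lemma shift_eq_0_iff[simp]: "shift c p = 0 \<longleftrightarrow> p = 0"
proof
  assume "shift c p = 0"
  then have "\<forall>x. poly p (x - c) = 0" by (metis poly_0 poly_shift)
  then have "\<forall>x. poly p x = 0" by (metis add_diff_cancel)
  then show "p = 0" by (simp add: poly_ext_iff)
qed simp
lemma lead_coeff_shift[simp]: "lead_coeff (shift c p) = lead_coeff p"
  by (simp add: shift_def lead_coeff_comp)

lemma poly_zero_inj:
  fixes p :: "complex poly"
  assumes "inj f" and "\<And>n::nat. poly p (f n) = 0"
  shows "p = 0"
proof (rule ccontr)
  assume "p \<noteq> 0"
  then have "finite {x. poly p x = 0}" by (rule poly_roots_finite)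
  moreover have "range f \<subseteq> {x. poly p x = 0}" using assms by auto
  ultimately have "finite (range f)" by (rule finite_subset[rotated])
  with assms(1) show False using finite_imageD by (metis infinite_UNIV_nat)
qed

lemma periodic_const:
  fixes p :: "complex poly"
  assumes h: "h \<noteq> 0" and per: "shift h p = p"
  shows "p = [:poly p 0:]"
proof -
  have step: "poly p (x - h) = poly p x" for x
    using per by (metis poly_shift)
  have k: "poly p (of_nat k * h) = poly p 0" for k
  proof (induction k)
    case (Suc k)
    have "poly p (of_nat (Suc k) * h) = poly p (of_nat (Suc k) * h - h)" by (rule step[symmetric])
    also have "of_nat (Suc k) * h - h = of_nat k * h" by (simp add: algebra_simps)
    finally show ?case using Suc by simp
  qed simp
  have "p - [:poly p 0:] = 0"
  proof (rule poly_zero_inj[of "\<lambda>k. of_nat k * h"])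
    show "inj (\<lambda>k. of_nat k * h :: complex)" using h by (auto simp: inj_def)
    show "poly (p - [:poly p 0:]) (of_nat n * h) = 0" for n using k by simp
  qed
  then show ?thesis by simp
qed

lemma degree_diff_shift:
  fixes p :: "complex poly"
  shows "degree (p - shift c p) \<le> degree p - 1"
proof (cases "degree p = 0")
  case True
  then obtain a where "p = [:a:]" by (metis degree_eq_zeroE)
  then show ?thesis by simp
next
  case False
  let ?r = "p - shift c p"
  have le: "degree ?r \<le> degree p" by (simp add: degree_diff_le)
  have cz: "coeff ?r (degree p) = 0"
    using lead_coeff_shift[of c p] by simp
  have "degree ?r < degree p"
  proof (rule ccontr)
    assume "\<not> ?thesis"
    then have "degree ?r = degree p" using le by simp
    then have "?r = 0" using cz by (metis leading_coeff_0_iff)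
    then show False using False \<open>degree ?r = degree p\<close> by simp
  qed
  then show ?thesis by simp
qed

lemma witt_step1:
  fixes q :: complex and p :: "int \<Rightarrow> complex poly"
  assumes q: "q \<noteq> 0"
  and rel: "\<And>m n. p m * shift (of_int m * q) (p n) - p n * shift (of_int n * q) (p m)
                = smult (of_int n * q - of_int m * q) (p (m + n))"
  and p0: "p 0 = [:0, 1:]"
  and m: "m \<noteq> 0"
  shows "\<exists>k. p m * shift (of_int m * q) (p (-m)) = [:k, - (of_int m * q), 1:]"
proof -
  define h where "h = of_int m * q"
  have h0: "h \<noteq> 0" using q m by (simp add: h_def)
  define F where "F = p m * shift h (p (-m))"
  have r: "F - p (-m) * shift (-h) (p m) = smult (- h - h) [:0, 1:]"
    using rel[of m "-m"] p0 by (simp add: F_def h_def)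
  have sF: "shift (-h) F = shift (-h) (p m) * p (-m)"
    by (simp add: F_def shift_mult shift_shift)
  have ev: "poly F x - poly F (x + h) = - 2 * h * x" for x
  proof -
    have "poly (F - p (-m) * shift (-h) (p m)) x = poly (smult (- h - h) [:0, 1:]) x"
      using r by simp
    moreover have "poly (p (-m) * shift (-h) (p m)) x = poly F (x + h)"
      using arg_cong[OF sF, of "\<lambda>p. poly p x"] by (simp add: mult.commute)
    ultimately show ?thesis by (simp add: algebra_simps)
  qed
  define G where "G = F - [:0, -h, 1:]"
  have "shift (-h) G = G"
  proof -
    have "poly (shift (-h) G) x = poly G x" for x
      using ev[of x] by (simp add: G_def algebra_simps power2_eq_square)
    then show ?thesis by (simp add: poly_ext_iff)
  qed
  then have "shift (- h) G = G" .
  from periodic_const[OF _ this] h0 have "G = [:poly G 0:]" by simp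
  then have "F = [:poly G 0, -h, 1:]" unfolding G_def
    by (metis (no_types, lifting) add_pCons diff_add_cancel add_0_left pCons_0_0 add.right_neutral)
  then show ?thesis unfolding F_def h_def by blast
qed

lemma lin_mult: "[:a, b:] * [:c, d:] = [:a * c, a * d + b * c, b * d:]"
  by (simp add: algebra_simps)

lemma deg1_form: "degree (p :: complex poly) \<le> 1 \<Longrightarrow> p = [:coeff p 0, coeff p 1:]"
  by (rule poly_eqI) (auto simp: coeff_pCons coeff_eq_0 split: nat.split)

lemma witt_deg:
  fixes q :: complex and p :: "int \<Rightarrow> complex poly"
  assumes q: "q \<noteq> 0"
  and rel: "\<And>m n. p m * shift (of_int m * q) (p n) - p n * shift (of_int n * q) (p m)
                = smult (of_int n * q - of_int m * q) (p (m + n))"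
  and p0: "p 0 = [:0, 1:]"
  shows "degree (p m) = 1"
proof -
  have sum2: "p m \<noteq> 0 \<and> p (-m) \<noteq> 0 \<and> degree (p m) + degree (p (-m)) = 2" if mz: "m \<noteq> 0" for m :: int
  proof -
    obtain k where k: "p m * shift (of_int m * q) (p (-m)) = [:k, - (of_int m * q), 1:]"
      using witt_step1[OF q rel p0 mz] by blast
    have nz: "p m * shift (of_int m * q) (p (-m)) \<noteq> 0" using k by simp
    then have a: "p m \<noteq> 0" and b: "p (-m) \<noteq> 0" by auto
    have "degree (p m * shift (of_int m * q) (p (-m))) = 2" using k by simp
    then show ?thesis using a b by (simp add: degree_mult_eq)
  qed
  have nd0: "degree (p (-m)) \<noteq> 0" if "m \<noteq> 0" for m :: int
  proof
    assume d0: "degree (p (-m)) = 0"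
    from sum2[OF that] have pm: "degree (p m) = 2" and nzm: "p (-m) \<noteq> 0" using d0 by auto
    obtain c0 where c0: "p (-m) = [:c0:]" using d0 by (metis degree_eq_zeroE)
    have "2 * m \<noteq> 0" using that by simp
    from sum2[OF this] have d2: "degree (p (2 * m)) \<le> 2" by simp
    have r: "p (2*m) * shift (of_int (2*m) * q) (p (-m)) - p (-m) * shift (of_int (-m) * q) (p (2*m))
             = smult (of_int (-m) * q - of_int (2*m) * q) (p (2*m + -m))" by (rule rel)
    have lhs: "p (2*m) * shift (of_int (2*m) * q) (p (-m)) - p (-m) * shift (of_int (-m) * q) (p (2*m))
             = smult c0 (p (2*m) - shift (of_int (-m) * q) (p (2*m)))"
      by (simp add: c0 smult_diff_right)
    have "degree (smult c0 (p (2*m) - shift (of_int (-m) * q) (p (2*m)))) \<le> 1"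
    proof -
      have "degree (p (2*m) - shift (of_int (-m) * q) (p (2*m))) \<le> degree (p (2*m)) - 1"
        by (rule degree_diff_shift)
      also have "\<dots> \<le> 1" using d2 by simp
      finally show ?thesis using degree_smult_le order.trans by blast
    qed
    moreover have "degree (smult (of_int (-m) * q - of_int (2*m) * q) (p (2*m + -m))) = 2"
    proof -
      have "of_int (-m) * q - of_int (2*m) * q \<noteq> 0" using that q by (simp add: algebra_simps)
      moreover have "2*m + -m = m" by simp
      ultimately show ?thesis using pm by simp
    qed
    moreover have "smult c0 (p (2*m) - shift (of_int (-m) * q) (p (2*m)))
        = smult (of_int (-m) * q - of_int (2*m) * q) (p (2*m + -m))"
      using lhs[symmetric] r by (rule trans)
    ultimately have "(2::nat) \<le> 1" by metis
    then show False by simp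
  qed
  show ?thesis
  proof (cases "m = 0")
    case True then show ?thesis using p0 by simp
  next
    case False
    have "degree (p (-m)) \<noteq> 0" using nd0 False by simp
    moreover have "degree (p m) \<noteq> 0" using nd0[of "-m"] False by simp
    ultimately show ?thesis using sum2[OF False] by linarith
  qed
qed

lemma witt_coeffs:
  fixes q :: complex and p :: "int \<Rightarrow> complex poly"
  assumes q: "q \<noteq> 0"
  and rel: "\<And>m n. p m * shift (of_int m * q) (p n) - p n * shift (of_int n * q) (p m)
                = smult (of_int n * q - of_int m * q) (p (m + n))"
  and that: "\<And>m. degree (p m) = 1"
  shows "(of_int n - of_int m) * coeff (p (m + n)) 1 = (of_int n - of_int m) * (coeff (p m) 1 * coeff (p n) 1)
      \<and> (of_int n - of_int m) * coeff (p (m + n)) 0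
         = of_int n * coeff (p m) 1 * coeff (p n) 0 - of_int m * coeff (p n) 1 * coeff (p m) 0"
proof -
  have pf: "p k = [:coeff (p k) 0, coeff (p k) 1:]" for k
    using deg1_form that by simp
  define c where "c k = coeff (p k) 1" for k
  define e where "e k = coeff (p k) 0" for k
  have pf': "p k = [:e k, c k:]" for k using pf c_def e_def by simp
  have r: "[:e m, c m:] * shift (of_int m * q) [:e n, c n:] - [:e n, c n:] * shift (of_int n * q) [:e m, c m:]
      = smult (of_int n * q - of_int m * q) [:e (m+n), c (m+n):]"
    using rel[of m n] by (simp only: pf'[symmetric])
  have r1: "coeff ([:e m, c m:] * shift (of_int m * q) [:e n, c n:] - [:e n, c n:] * shift (of_int n * q) [:e m, c m:]) 1
      = coeff (smult (of_int n * q - of_int m * q) [:e (m+n), c (m+n):]) 1" using r by simp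
  have r0: "coeff ([:e m, c m:] * shift (of_int m * q) [:e n, c n:] - [:e n, c n:] * shift (of_int n * q) [:e m, c m:]) 0
      = coeff (smult (of_int n * q - of_int m * q) [:e (m+n), c (m+n):]) 0" using r by simp
  from r1 have "q * ((of_int n - of_int m) * c (m + n)) = q * ((of_int n - of_int m) * (c m * c n))"
    by (simp add: lin_mult algebra_simps)
  then have A: "(of_int n - of_int m) * c (m + n) = (of_int n - of_int m) * (c m * c n)"
    using q by simp
  from r0 have "q * ((of_int n - of_int m) * e (m + n)) = q * (of_int n * c m * e n - of_int m * c n * e m)"
    by (simp add: lin_mult algebra_simps)
  then have B: "(of_int n - of_int m) * e (m + n) = of_int n * c m * e n - of_int m * c n * e m"
    using q by simp
  show ?thesis using A B by (simp add: c_def e_def)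
qed

lemma mult_rec_solve:
  fixes c :: "int \<Rightarrow> complex"
  assumes C: "\<And>m n. m \<noteq> n \<Longrightarrow> c (m + n) = c m * c n"
  and c0: "c 0 = 1" and cnz: "\<And>m. c m \<noteq> 0"
  shows "c m = c 1 powi m"
proof -
  define l where "l = c 1"
  have l0: "l \<noteq> 0" using cnz l_def by simp
  have c3: "c 3 = c 2 * l" using C[of 2 1] l_def by simp
  have c4: "c 4 = c 3 * l" using C[of 3 1] l_def by simp
  have c5: "c 5 = c 4 * l" using C[of 4 1] l_def by simp
  have c6: "c 6 = c 5 * l" using C[of 5 1] l_def by simp
  have c6': "c 6 = c 2 * c 4" using C[of 2 4] by simp
  have "c 2 * (c 2 * l^2) = c 2 * l^4"
    using c3 c4 c5 c6 c6' by (simp add: power2_eq_square power4_eq_xxxx algebra_simps)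
  then have c2: "c 2 = l^2" using cnz[of 2] l0 by (simp add: power2_eq_square power4_eq_xxxx)
  have pos: "c (int k) = l ^ k" for k
  proof (induction k)
    case 0 then show ?case using c0 by simp
  next
    case (Suc k)
    show ?case
    proof (cases "k = 1")
      case True then show ?thesis using c2 by (simp add: numeral_2_eq_2)
    next
      case False
      then have "int k \<noteq> 1" by simp
      from C[OF this] have "c (int k + 1) = c (int k) * l" using l_def by simp
      then show ?thesis using Suc by (simp add: add.commute mult.commute)
    qed
  qed
  have neg: "c (- int k) = inverse (l ^ k)" for k
  proof (cases "k = 0")
    case True then show ?thesis using c0 by simp
  next
    case False
    then have "int k \<noteq> - int k" by simp
    from C[OF this] have "c 0 = c (int k) * c (- int k)" by simp
    then have "1 = l ^ k * c (- int k)" using c0 pos by simp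
    then show ?thesis by (metis inverse_unique)
  qed
  show ?thesis
  proof (cases "m \<ge> 0")
    case True
    then obtain k where "m = int k" by (metis nonneg_eq_int)
    then show ?thesis using pos l_def by simp
  next
    case False
    then obtain k where "m = - int k" by (metis nonpos_int_cases linorder_not_le less_imp_le)
    then show ?thesis using neg l_def by (simp add: power_int_minus)
  qed
qed

lemma lin_rec_solve:
  fixes f :: "int \<Rightarrow> complex"
  assumes E: "\<And>m n. m \<noteq> n \<Longrightarrow> (of_int n - of_int m) * f (m + n) = of_int n * f n - of_int m * f m"
  and f0: "f 0 = 0"
  shows "f m = of_int m * f 1"
proof -
  have neg: "f (- k) = - f k" for k
  proof (cases "k = 0")
    case True then show ?thesis using f0 by simp
  next
    case False
    then have "k \<noteq> - k" by simp
    from E[OF this] f0 have "of_int k * (f (- k) + f k) = 0" by (simp add: algebra_simps)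
    then show ?thesis using False by (simp add: add_eq_0_iff)
  qed
  have one: "(of_int n - 1) * f (n + 1) = of_int n * f n - f 1" if "n \<noteq> 1" for n
    using E[of 1 n] that by (simp add: add.commute)
  have e3: "f 3 = 2 * f 2 - f 1" using one[of 2] by simp
  have "(-4) * f 2 = - f (-1) - 3 * f 3" using E[of 3 "-1"] by simp
  then have e2: "f 2 = 2 * f 1" using e3 neg[of 1] by (simp add: algebra_simps)
  have pos: "f (int k) = of_nat k * f 1" for k
  proof (induction k rule: nat_less_induct)
    case (1 k)
    show ?case
    proof (cases "k \<le> 2")
      case True
      then have "k = 0 \<or> k = 1 \<or> k = 2" by auto
      then show ?thesis using f0 e2 by auto
    next
      case False
      then obtain j where j: "k = Suc j" "j \<ge> 2" by (metis Suc_le_eq not_le_imp_less Suc_pred' le_less_trans less_nat_zero_code nat.exhaust not_less_eq_eq)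
      have "int j \<noteq> 1" using j by simp
      from one[OF this] have "(of_int (int j) - 1) * f (int j + 1) = of_int (int j) * f (int j) - f 1" .
      moreover have "f (int j) = of_nat j * f 1" using 1 j by simp
      ultimately have "(of_nat j - 1) * f (int j + 1) = (of_nat j - 1) * (of_nat j + 1) * f 1"
        by (simp add: algebra_simps)
      moreover have "(of_nat j - 1 :: complex) \<noteq> 0" using j by simp
      ultimately have "f (int j + 1) = (of_nat j + 1) * f 1" by simp
      then show ?thesis using j by (simp add: add.commute)
    qed
  qed
  show ?thesis
  proof (cases "m \<ge> 0")
    case True
    then obtain k where "m = int k" by (metis nonneg_eq_int)
    then show ?thesis using pos by simp
  next
    case False
    then obtain k where "m = - int k" by (metis nonpos_int_cases linorder_not_le less_imp_le)
    then show ?thesis using pos neg by simp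
  qed
qed

lemma witt_solve:
  fixes q :: complex and p :: "int \<Rightarrow> complex poly"
  assumes q: "q \<noteq> 0"
  and rel: "\<And>m n. p m * shift (of_int m * q) (p n) - p n * shift (of_int n * q) (p m)
                = smult (of_int n * q - of_int m * q) (p (m + n))"
  and p0: "p 0 = [:0, 1:]"
  shows "\<exists>l \<alpha>. l \<noteq> 0 \<and> (\<forall>m. p m = smult (l powi m) [:\<alpha> * of_int m, 1:])"
proof -
  have deg: "degree (p m) = 1" for m by (rule witt_deg[OF q rel p0])
  define c where "c k = coeff (p k) 1" for k
  define e where "e k = coeff (p k) 0" for k
  have pf: "p k = [:e k, c k:]" for k using deg1_form[of "p k"] deg c_def e_def by simp
  have cnz: "c k \<noteq> 0" for k
  proof
    assume "c k = 0"
    then have "p k = [:e k:]" using pf by simp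
    then show False using deg[of k] by simp
  qed
  have co: "(of_int n - of_int m) * c (m + n) = (of_int n - of_int m) * (c m * c n)
      \<and> (of_int n - of_int m) * e (m + n) = of_int n * c m * e n - of_int m * c n * e m" for m n
    using witt_coeffs[OF q rel deg] unfolding c_def e_def by blast
  have c0: "c 0 = 1" and e0: "e 0 = 0" using p0 by (simp_all add: c_def e_def)
  have C: "c (m + n) = c m * c n" if "m \<noteq> n" for m n
  proof -
    have "(of_int n - of_int m :: complex) \<noteq> 0" using that by simp
    then show ?thesis using co[of n m] by (metis co mult_left_cancel)
  qed
  define l where "l = c 1"
  have cl: "c m = l powi m" for m unfolding l_def by (rule mult_rec_solve[OF C c0 cnz])
  have l0: "l \<noteq> 0" using cnz l_def by simp
  define f where "f k = e k / c k" for k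
  have E: "(of_int n - of_int m) * f (m + n) = of_int n * f n - of_int m * f m" if "m \<noteq> n" for m n
  proof -
    have "(of_int n - of_int m) * e (m + n) = of_int n * c m * e n - of_int m * c n * e m"
      using co by blast
    moreover have "c (m + n) = c m * c n" using C that by blast
    ultimately show ?thesis using cnz[of m] cnz[of n] unfolding f_def
      by (simp add: field_simps)
  qed
  have f0: "f 0 = 0" using e0 f_def by simp
  have fl: "f m = of_int m * f 1" for m by (rule lin_rec_solve[OF E f0])
  show ?thesis
  proof (intro exI conjI allI)
    show "l \<noteq> 0" by (rule l0)
    fix m
    have "e m = c m * f m" using cnz[of m] f_def by simp
    then show "p m = smult (l powi m) [:f 1 * of_int m, 1:]"
      using pf[of m] cl[of m] fl[of m] by (simp add: algebra_simps)
  qed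
qed

lemma class0:
  fixes q :: complex and P Q A B :: "int \<Rightarrow> nat \<Rightarrow> complex poly"
  assumes q: "q \<noteq> 0"
  and LLe: "\<And>m i n j. P m i * shift (of_int m * q) (P n j) - P n j * shift (of_int n * q) (P m i)
                = smult (cLL q m i n j) (P (m + n) (i + j))"
  and LLo: "\<And>m i n j. Q m i * shift (of_int m * q) (Q n j) - Q n j * shift (of_int n * q) (Q m i)
                = smult (cLL q m i n j) (Q (m + n) (i + j))"
  and LGf: "\<And>m i n j. Q m i * shift (of_int m * q) (A n j) - A n j * shift (of_int n * q) (P m i)
                = smult (cLG q m i n j) (A (m + n) (i + j))"
  and GGf: "\<And>m i n j. B m i * shift (of_int m * q) (A n j) + B n j * shift (of_int n * q) (A m i)
                = smult (2 * q) (P (m + n) (i + j))"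
  and P00: "P 0 0 = [:0, 1:]" and Q00: "Q 0 0 = [:0, 1:]" and A00: "A 0 0 = 1" and B00: "B 0 0 = [:0, q:]"
  shows "\<exists>l \<alpha>. l \<noteq> 0 \<and> (\<forall>m. P m 0 = smult (l powi m) [:\<alpha> * of_int m, 1:]
            \<and> Q m 0 = smult (l powi m) [:\<alpha> * of_int m - of_int m * q / 2, 1:]
            \<and> A m 0 = [:l powi m:]
            \<and> B m 0 = smult (q * l powi m) [:2 * \<alpha> * of_int m, 1:])"
proof -
  have relP: "P m 0 * shift (of_int m * q) (P n 0) - P n 0 * shift (of_int n * q) (P m 0)
                = smult (of_int n * q - of_int m * q) (P (m + n) 0)" for m n
    using LLe[of m 0 n 0] by (simp add: cLL_def)
  have relQ: "Q m 0 * shift (of_int m * q) (Q n 0) - Q n 0 * shift (of_int n * q) (Q m 0)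
                = smult (of_int n * q - of_int m * q) (Q (m + n) 0)" for m n
    using LLo[of m 0 n 0] by (simp add: cLL_def)
  obtain l \<alpha> where l0: "l \<noteq> 0" and Pf: "\<And>m. P m 0 = smult (l powi m) [:\<alpha> * of_int m, 1:]"
    using witt_solve[of q "\<lambda>m. P m 0", OF q relP] P00 by auto
  obtain u \<beta> where u0: "u \<noteq> 0" and Qf: "\<And>m. Q m 0 = smult (u powi m) [:\<beta> * of_int m, 1:]"
    using witt_solve[of q "\<lambda>m. Q m 0", OF q relQ] Q00 by auto
  have Arel: "Q m 0 - P m 0 = smult (- (of_int m * q / 2)) (A m 0)" for m
    using LGf[of m 0 0 0] A00 by (simp add: cLG_def)
  have Af: "A m 0 = smult (- 2 / (of_int m * q)) (Q m 0 - P m 0)" if "m \<noteq> 0" for m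
  proof -
    have "smult (- 2 / (of_int m * q)) (Q m 0 - P m 0) = smult (- 2 / (of_int m * q) * - (of_int m * q / 2)) (A m 0)"
      using Arel[of m] by simp
    also have "- 2 / (of_int m * q) * - (of_int m * q / 2) = 1" using that q by (simp add: field_simps)
    finally show ?thesis by simp
  qed
  have A1: "A 1 0 = [:- 2 * (u * \<beta> - l * \<alpha>) / q, - 2 * (u - l) / q:]"
    using Af[of 1] Pf[of 1] Qf[of 1] by (simp add: algebra_simps diff_divide_distrib)
  have A2: "A 2 0 = smult (- 2 / (2 * q)) (smult (u^2) [:\<beta> * 2, 1:] - smult (l^2) [:\<alpha> * 2, 1:])"
    using Af[of 2] Pf[of 2] Qf[of 2] by simp
  have r11: "Q 1 0 * shift q (A 1 0) - A 1 0 * shift q (P 1 0) = smult (q / 2) (A 2 0)"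
    using LGf[of 1 0 1 0] by (simp add: cLG_def)
  have "coeff (Q 1 0 * shift q (A 1 0) - A 1 0 * shift q (P 1 0)) 2 = coeff (smult (q / 2) (A 2 0)) 2"
    using r11 by simp
  then have H: "l * (q * (u * 4)) = l * (l * (q * 2)) + q * (u * (u * 2))"
    using A1 A2 Pf[of 1] Qf[of 1] q by (simp add: lin_mult numeral_2_eq_2 field_simps)
  then have "q * ((u - l) * (u - l)) = 0" by algebra
  then have "(u - l) * (u - l) = 0" using q by simp
  then have ul: "u = l" by simp
  define \<kappa> where "\<kappa> = 2 * (\<alpha> - \<beta>) / q"
  have beq: "\<beta> = \<alpha> - q * \<kappa> / 2" using q by (simp add: \<kappa>_def field_simps)
  have Ac: "A m 0 = [:l powi m * \<kappa>:]" if "m \<noteq> 0" for m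
    using Af[OF that] Pf[of m] Qf[of m] ul that q by (simp add: \<kappa>_def field_simps)
  have "poly (Q 1 0 * shift q (A 1 0) - A 1 0 * shift q (P 1 0)) 0 = poly (smult (q / 2) (A 2 0)) 0"
    using r11 by simp
  then have H1: "l * \<beta> * (l * \<kappa>) - l * \<kappa> * (l * (0 - q) + l * \<alpha>) = q / 2 * (l^2 * \<kappa>)"
    using Ac[of 1] Ac[of 2] Pf[of 1] Qf[of 1] ul by (simp add: algebra_simps)
  have "l * l * q * (\<kappa> * (1 - \<kappa>)) = 0" using H1 beq by algebra
  then have e1: "\<kappa> * (1 - \<kappa>) = 0" using q l0 by simp
  have r1m: "Q 1 0 * shift q (A (-1) 0) - A (-1) 0 * shift (- q) (P 1 0) = smult (- (3 * q / 2)) (A 0 0)"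
    using LGf[of 1 0 "-1" 0] by (simp add: cLG_def)
  have "poly (Q 1 0 * shift q (A (-1) 0) - A (-1) 0 * shift (- q) (P 1 0)) 0 = poly (smult (- (3 * q / 2)) (A 0 0)) 0"
    using r1m by simp
  then have H2: "l * \<beta> * (inverse l * \<kappa>) - inverse l * \<kappa> * (l * (0 + q) + l * \<alpha>) = - (3 * q / 2)"
    using Ac[of "-1"] Pf[of 1] Qf[of 1] ul A00 by (simp add: algebra_simps power_int_minus)
  have li: "l * inverse l = 1" using l0 by simp
  have "q * (\<kappa> * \<kappa> + 2 * \<kappa> - 3) = 0" using H2 beq li by algebra
  then have e2: "\<kappa> * \<kappa> + 2 * \<kappa> - 3 = 0" using q by simp
  have k1: "\<kappa> = 1"
  proof -
    have "\<kappa> \<noteq> 0" using e2 by auto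
    then have "1 - \<kappa> = 0" using e1 by simp
    then show ?thesis by simp
  qed
  have Afin: "A m 0 = [:l powi m:]" for m
    using Ac[of m] k1 A00 by (cases "m = 0") auto
  have Bfin: "B m 0 = smult (q * l powi m) [:2 * \<alpha> * of_int m, 1:]" for m
  proof -
    have "B m 0 * shift (of_int m * q) (A 0 0) + B 0 0 * shift (of_int 0 * q) (A m 0) = smult (2 * q) (P (m + 0) (0 + 0))"
      by (rule GGf)
    then have "B m 0 = smult (2 * q) (P m 0) - [:0, q:] * A m 0" using A00 B00 by (simp add: algebra_simps)
    then show ?thesis using Pf[of m] Afin[of m] by (simp add: algebra_simps)
  qed
  show ?thesis
  proof (intro exI conjI allI)
    show "l \<noteq> 0" by (rule l0)
    fix m
    show "P m 0 = smult (l powi m) [:\<alpha> * of_int m, 1:]" by (rule Pf)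
    show "Q m 0 = smult (l powi m) [:\<alpha> * of_int m - of_int m * q / 2, 1:]"
      using Qf[of m] ul beq k1 by (simp add: algebra_simps)
    show "A m 0 = [:l powi m:]" by (rule Afin)
    show "B m 0 = smult (q * l powi m) [:2 * \<alpha> * of_int m, 1:]" by (rule Bfin)
  qed
qed

lemma coeff1_pcomp_Suc: "coeff (pcompose p [:a, b:]) (Suc 0) = b * poly (pderiv p) (a :: complex)"
proof (induction p)
  case (pCons c p)
  have m: "[:a, b:] * s = smult a s + pCons 0 (smult b s)" for s :: "complex poly"
    by (simp add: mult_pCons_left)
  show ?case
    by (simp add: pcompose_pCons m pCons.IH pderiv_pCons coeff_pcompose_0 algebra_simps)
qed simp

lemma coeff1_pcomp: "coeff (pcompose p [:a, b:]) 1 = b * poly (pderiv p) (a :: complex)"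
  using coeff1_pcomp_Suc by simp

lemma coeff_lin_mult1: "coeff ([:a, b:] * s) 1 = a * coeff s 1 + b * coeff (s :: complex poly) 0"
  by (simp add: mult_pCons_left)
lemma coeff_lin_mult0: "coeff ([:a, b:] * s) 0 = a * coeff (s :: complex poly) 0"
  by (simp add: mult_pCons_left)
lemma coeff_const_mult: "coeff ([:a:] * s) k = a * coeff (s :: complex poly) k"
  by simp

lemma int_roots_zero:
  fixes Y :: "complex poly"
  assumes "\<And>n::int. poly Y (of_int n) = 0"
  shows "Y = 0"
proof (rule poly_zero_inj[of "\<lambda>n. of_nat n"])
  show "inj (\<lambda>n::nat. of_nat n :: complex)" by (simp add: inj_def)
  show "poly Y (of_nat n) = 0" for n using assms[of "int n"] by simp
qed

lemma poly_pcomp_lin: "poly (pcompose p [:a, b:]) y = poly p (a + b * y)"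
  by (simp add: poly_pcompose mult.commute)

lemma coeff_xmult: "coeff ([:0, 1:] * (p :: complex poly)) k = (if k = 0 then 0 else coeff p (k - 1))"
  by (cases k) (simp_all add: mult_pCons_left)

lemma classI_nonres:
  fixes q l \<alpha> :: complex and P Q A B :: "int \<Rightarrow> nat \<Rightarrow> complex poly" and i :: nat
  assumes q: "q \<noteq> 0" and l0: "l \<noteq> 0"
  and LLe: "\<And>m i n j. P m i * shift (of_int m * q) (P n j) - P n j * shift (of_int n * q) (P m i)
                = smult (cLL q m i n j) (P (m + n) (i + j))"
  and LGf: "\<And>m i n j. Q m i * shift (of_int m * q) (A n j) - A n j * shift (of_int n * q) (P m i)
                = smult (cLG q m i n j) (A (m + n) (i + j))"
  and GGf: "\<And>m i n j. B m i * shift (of_int m * q) (A n j) + B n j * shift (of_int n * q) (A m i)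
                = smult (2 * q) (P (m + n) (i + j))"
  and P0: "\<And>m. P m 0 = smult (l powi m) [:\<alpha> * of_int m, 1:]"
  and Q0: "\<And>m. Q m 0 = smult (l powi m) [:\<alpha> * of_int m - of_int m * q / 2, 1:]"
  and A0: "\<And>m. A m 0 = [:l powi m:]"
  and B0: "\<And>m. B m 0 = smult (q * l powi m) [:2 * \<alpha> * of_int m, 1:]"
  and i1: "i \<ge> 1" and iq0: "of_nat i + q \<noteq> 0"
  shows "P m i = 0 \<and> Q m i = 0 \<and> A m i = 0 \<and> B m i = 0"
proof -
  define iq where "iq = of_nat i + q"
  define R where "R = P 0 i"
  define S where "S = A 0 i"
  have iqn: "iq \<noteq> 0" using iq0 iq_def by simp
  have lpn: "l powi n \<noteq> 0" for n using l0 by simp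
  have Q0i: "Q 0 i = R"
    using LGf[of 0 i 0 0] A0[of 0] by (simp add: cLG_def R_def)
  have Qm: "Q m i = P m i - smult (of_int m * q / 2) (A m i)" for m
    using LGf[of m i 0 0] A0[of 0] by (simp add: cLG_def algebra_simps)
  have Bm: "B m i = smult (2 * q) (P m i) - [:0, q:] * A m i" for m
    using GGf[of m i 0 0] A0[of 0] B0[of 0] by (simp add: algebra_simps)
  have H0x: "l powi n * (poly R x - poly R (x - of_int n * q)) = of_int n * iq * poly (A n i) x" for n x
    using arg_cong[OF LGf[of 0 i n 0], of "\<lambda>p. poly p x"] Q0i A0[of n]
    by (simp add: cLG_def iq_def R_def algebra_simps)
  have E0x: "l powi n * (x + \<alpha> * of_int n) * (poly R x - poly R (x - of_int n * q)) = of_int n * iq * poly (P n i) x" for n x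
    using arg_cong[OF LLe[of 0 i n 0], of "\<lambda>p. poly p x"] P0[of n]
    by (simp add: cLL_def iq_def R_def algebra_simps)
  have S0x: "l powi n * (x + \<alpha> * of_int n - of_int n * q / 2) * poly S (x - of_int n * q) - poly S x * (l powi n * (x + \<alpha> * of_int n))
      = - (of_int n * (of_nat i + q / 2)) * poly (A n i) x" for n x
    using arg_cong[OF LGf[of n 0 0 i], of "\<lambda>p. poly p x"] P0[of n] Q0[of n]
    by (simp add: cLG_def S_def algebra_simps)
  have B0i: "B 0 i = smult (2 * q) R - [:0, q:] * S" using Bm[of 0] R_def S_def by simp
  have F0x: "(2 * q * poly R x - q * x * poly S x) * l powi n + q * l powi n * (x + 2 * \<alpha> * of_int n) * poly S (x - of_int n * q)
      = 2 * q * poly (P n i) x" for n x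
    using arg_cong[OF GGf[of 0 i n 0], of "\<lambda>p. poly p x"] A0[of n] B0[of n] B0i
    by (simp add: S_def algebra_simps)
  have Jx: "of_int n * iq * (2 * poly R x - x * poly S x + (x + 2 * \<alpha> * of_int n) * poly S (x - of_int n * q))
      = 2 * (x + \<alpha> * of_int n) * (poly R x - poly R (x - of_int n * q))" for n x
  proof -
    have "q * l powi n * (of_int n * iq * (2 * poly R x - x * poly S x + (x + 2 * \<alpha> * of_int n) * poly S (x - of_int n * q))
      - 2 * (x + \<alpha> * of_int n) * (poly R x - poly R (x - of_int n * q))) = 0"
      using E0x[of n x] F0x[of x n] by algebra
    then show ?thesis using q l0 by simp
  qed
  have Kx: "iq * ((x + \<alpha> * of_int n - of_int n * q / 2) * poly S (x - of_int n * q) - (x + \<alpha> * of_int n) * poly S x)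
      + (of_nat i + q / 2) * (poly R x - poly R (x - of_int n * q)) = 0" for n x
  proof -
    have "l powi n * (iq * ((x + \<alpha> * of_int n - of_int n * q / 2) * poly S (x - of_int n * q) - (x + \<alpha> * of_int n) * poly S x)
      + (of_nat i + q / 2) * (poly R x - poly R (x - of_int n * q))) = 0"
      using H0x[of n x] S0x[of n x] by algebra
    then show ?thesis using l0 by simp
  qed
  have J1: "iq * 2 * poly R x - 2 * x * q * poly (pderiv R) x = 0" for x
  proof -
    define JY where "JY = smult iq ([:0, 1:] * ([:2 * poly R x - x * poly S x:] + [:x, 2 * \<alpha>:] * pcompose S [:x, - q:]))
       - smult 2 ([:x, \<alpha>:] * ([:poly R x:] - pcompose R [:x, - q:]))"
    have "poly JY (of_int n) = 0" for n
      using Jx[of n x] unfolding JY_def by (simp add: poly_pcomp_lin algebra_simps)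
    then have "JY = 0" by (rule int_roots_zero)
    then have "coeff JY 1 = 0" by simp
    then show ?thesis unfolding JY_def
      by (simp add: coeff_xmult coeff_lin_mult1 coeff_lin_mult0 coeff1_pcomp coeff1_pcomp_Suc coeff_pcompose_0 algebra_simps)
  qed
  have JC: "(iq - q * of_nat k) * coeff R k = 0" for k
  proof -
    have J1': "iq * poly R x - x * q * poly (pderiv R) x = 0" for x using J1[of x] by algebra
    have "smult iq R - smult q ([:0, 1:] * pderiv R) = 0"
      using J1' by (simp add: poly_ext_iff algebra_simps)
    then have "coeff (smult iq R - smult q ([:0, 1:] * pderiv R)) k = 0" by simp
    then show ?thesis by (cases k) (simp_all add: coeff_xmult coeff_pderiv algebra_simps)
  qed
  have K1: "iq * (- q * x * poly (pderiv S) x - q / 2 * poly S x) + (of_nat i + q / 2) * q * poly (pderiv R) x = 0" for x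
  proof -
    define KY where "KY = smult iq ([:x, \<alpha> - q / 2:] * pcompose S [:x, - q:] - [:x, \<alpha>:] * [:poly S x:])
       + smult (of_nat i + q / 2) ([:poly R x:] - pcompose R [:x, - q:])"
    have "poly KY (of_int n) = 0" for n
      using Kx[of x n] unfolding KY_def by (simp add: poly_pcomp_lin algebra_simps)
    then have "KY = 0" by (rule int_roots_zero)
    then have "coeff KY 1 = 0" by simp
    then show ?thesis unfolding KY_def
      by (simp add: coeff_lin_mult1 coeff_lin_mult0 coeff1_pcomp coeff1_pcomp_Suc coeff_pcompose_0 algebra_simps)
  qed
  have KC: "iq * (of_nat k + 1 / 2) * coeff S k = (of_nat i + q / 2) * of_nat (Suc k) * coeff R (Suc k)" for k
  proof -
    have "smult iq ([:0, 1:] * pderiv S) + smult (iq / 2) S - smult (of_nat i + q / 2) (pderiv R) = 0"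
    proof -
      have "poly (smult iq ([:0, 1:] * pderiv S) + smult (iq / 2) S - smult (of_nat i + q / 2) (pderiv R)) x = 0" for x
      proof -
        have "q * poly (smult iq ([:0, 1:] * pderiv S) + smult (iq / 2) S - smult (of_nat i + q / 2) (pderiv R)) x = 0"
          using K1[of x] by (simp add: algebra_simps)
        then show ?thesis using q by simp
      qed
      then show ?thesis by (simp add: poly_ext_iff)
    qed
    then have "coeff (smult iq ([:0, 1:] * pderiv S) + smult (iq / 2) S - smult (of_nat i + q / 2) (pderiv R)) k = 0" by simp
    then show ?thesis by (cases k) (simp_all add: coeff_xmult coeff_pderiv algebra_simps)
  qed
  have R0: "R = 0"
  proof (rule ccontr)
    assume Rnz: "R \<noteq> 0"
    define d where "d = degree R"
    define c where "c = lead_coeff R"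
    have c0: "c \<noteq> 0" using Rnz c_def by simp
    have iqd: "iq = q * of_nat d" using JC[of d] c0 by (simp add: c_def d_def)
    have d0: "d \<noteq> 0" using iqd iqn by auto
    have d1: "d \<noteq> 1"
    proof
      assume "d = 1"
      then have "of_nat i + q = q" using iqd iq_def by simp
      then show False using i1 by simp
    qed
    have Rm: "R = monom c d"
    proof (rule poly_eqI)
      fix k
      show "coeff R k = coeff (monom c d) k"
      proof (cases "k = d")
        case True then show ?thesis by (simp add: c_def d_def)
      next
        case False
        have "iq - q * of_nat k = q * (of_nat d - of_nat k)" using iqd by (simp add: algebra_simps)
        moreover have "(of_nat d - of_nat k :: complex) \<noteq> 0" using False by simp
        ultimately have "iq - q * of_nat k \<noteq> 0" using q by simp
        then have "coeff R k = 0" using JC[of k] by simp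
        then show ?thesis using False by simp
      qed
    qed
    have hi: "of_nat i + q / 2 = q * (of_nat d - 1 / 2)" using iqd iq_def by (simp add: algebra_simps)
    have Sm: "S = monom c (d - 1)"
    proof (rule poly_eqI)
      fix k
      have kh: "(of_nat k + 1 / 2 :: complex) \<noteq> 0"
      proof
        assume "(of_nat k + 1 / 2 :: complex) = 0"
        then have "Re (of_nat k + 1 / 2 :: complex) = 0" by simp
        then show False by simp
      qed
      show "coeff S k = coeff (monom c (d - 1)) k"
      proof (cases "Suc k = d")
        case True
        then have kd: "k = d - 1" by simp
        have "iq * (of_nat k + 1 / 2) * coeff S k = (of_nat i + q / 2) * of_nat (Suc k) * c"
          using KC[of k] True Rm by simp
        also have "\<dots> = iq * (of_nat k + 1 / 2) * c"
        proof -
          have "of_nat i + q = q * (of_nat k + 1)" using iqd iq_def True[symmetric] by (simp add: algebra_simps)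
          then have ik: "of_nat i = q * of_nat k" by (simp add: algebra_simps)
          show ?thesis using ik iq_def by (simp add: field_simps)
        qed
        finally have "coeff S k = c" using iqn kh by simp
        then show ?thesis using kd by simp
      next
        case False
        then have "iq * (of_nat k + 1 / 2) * coeff S k = 0" using KC[of k] Rm by simp
        then have "coeff S k = 0" using iqn kh by simp
        then show ?thesis using False d0 by auto
      qed
    qed
    have pR: "poly R z = c * z ^ d" for z using Rm by (simp add: poly_monom)
    have pS: "poly S z = c * z ^ (d - 1)" for z using Sm by (simp add: poly_monom)
    have dS: "d = Suc (d - 1)" using d0 by simp
    define w where "w = c * (- q) ^ (d - 1)"
    have w0: "w \<noteq> 0" using c0 q w_def by simp
    have Rmq: "poly R (- q) = w * (- q)"
      using pR[of "- q"] dS w_def by (metis mult.assoc mult.commute power_Suc)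
    have Smq: "poly S (- q) = w" using pS w_def by simp
    have R00: "poly R 0 = 0" using pR d0 by simp
    have S00: "poly S 0 = 0" using pS d0 d1 by simp
    have "of_int 1 * iq * (2 * poly R 0 - 0 * poly S 0 + (0 + 2 * \<alpha> * of_int 1) * poly S (0 - of_int 1 * q))
      = 2 * (0 + \<alpha> * of_int 1) * (poly R 0 - poly R (0 - of_int 1 * q))" by (rule Jx)
    then have "iq * (2 * \<alpha> * w) = 2 * \<alpha> * (0 - w * (- q))" using R00 Rmq Smq by simp
    then have "2 * \<alpha> * w * of_nat i = 0" using iq_def by (simp add: algebra_simps)
    then have al0: "\<alpha> = 0" using w0 i1 by simp
    have L1: "Q 1 i * shift (of_int 1 * q) (A (-1) 0) - A (-1) 0 * shift (of_int (-1) * q) (P 1 i)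
        = smult (cLG q 1 i (-1) 0) (A (1 + -1) (i + 0))" by (rule LGf)
    have "poly (Q 1 i) 0 * inverse l - inverse l * poly (P 1 i) q = cLG q 1 i (-1) 0 * poly S 0"
      using arg_cong[OF L1, of "\<lambda>p. poly p 0"] A0[of "-1"] by (simp add: S_def power_int_minus mult.commute)
    then have "inverse l * (poly (Q 1 i) 0 - poly (P 1 i) q) = 0" using S00 by (simp add: algebra_simps)
    then have e1: "poly (Q 1 i) 0 = poly (P 1 i) q" using l0 by simp
    have e2: "poly (Q 1 i) 0 = poly (P 1 i) 0 - q / 2 * poly (A 1 i) 0" using Qm[of 1] by simp
    have e3: "iq * poly (P 1 i) 0 = 0" using E0x[of 1 0] al0 by simp
    have e4: "l * q * (poly R q - poly R 0) = iq * poly (P 1 i) q" using E0x[of 1 q] al0 by simp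
    have e5: "l * (poly R 0 - poly R (- q)) = iq * poly (A 1 i) 0" using H0x[of 1 0] by simp
    have e3': "poly (P 1 i) 0 = 0" using e3 iqn by simp
    have "poly (P 1 i) q = - (q / 2 * poly (A 1 i) 0)" using e1 e2 e3' by simp
    then have "q * poly (A 1 i) 0 + 2 * poly (P 1 i) q = 0" by simp
    then have "l * q * (poly R (- q) - 2 * poly R q) = 0"
      using e4 e5 R00 by algebra
    then have "poly R (- q) = 2 * poly R q" using l0 q by simp
    then have "c * ((- 1) ^ d * q ^ d) = 2 * (c * q ^ d)" using pR by (simp add: power_mult_distrib[symmetric])
    then have "(- 1 :: complex) ^ d = 2" using c0 q by simp
    then show False by (cases "even d") simp_all
  qed
  have An: "A n i = 0" if "n \<noteq> 0" for n
  proof -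
    have "poly (A n i) x = 0" for x using H0x[of n x] R0 that iqn by simp
    then show ?thesis by (simp add: poly_ext_iff)
  qed
  have Pn: "P n i = 0" for n
  proof (cases "n = 0")
    case True then show ?thesis using R0 R_def by simp
  next
    case False
    have "poly (P n i) x = 0" for x using E0x[of n x] R0 False iqn by simp
    then show ?thesis by (simp add: poly_ext_iff)
  qed
  have S0: "S = 0"
  proof (rule poly_eqI)
    fix k
    have kh: "(of_nat k + 1 / 2 :: complex) \<noteq> 0"
    proof
      assume "(of_nat k + 1 / 2 :: complex) = 0"
      then have "Re (of_nat k + 1 / 2 :: complex) = 0" by simp
      then show False by simp
    qed
    show "coeff S k = coeff 0 k" using KC[of k] R0 iqn kh by simp
  qed
  have Afin: "A n i = 0" for n using An S0 S_def by (cases "n = 0") auto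
  show ?thesis using Pn Afin Qm Bm by simp
qed

lemma zero_from_coef:
  fixes X :: "complex poly"
  assumes "0 = smult c X" and "c \<noteq> 0" shows "X = 0"
  using assms by simp

lemma classI_res_high:
  fixes q :: complex and P Q A B :: "int \<Rightarrow> nat \<Rightarrow> complex poly" and i :: nat
  assumes LLe: "\<And>m i n j. P m i * shift (of_int m * q) (P n j) - P n j * shift (of_int n * q) (P m i)
                = smult (cLL q m i n j) (P (m + n) (i + j))"
  and LLo: "\<And>m i n j. Q m i * shift (of_int m * q) (Q n j) - Q n j * shift (of_int n * q) (Q m i)
                = smult (cLL q m i n j) (Q (m + n) (i + j))"
  and LGf: "\<And>m i n j. Q m i * shift (of_int m * q) (A n j) - A n j * shift (of_int n * q) (P m i)
                = smult (cLG q m i n j) (A (m + n) (i + j))"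
  and LGt: "\<And>m i n j. P m i * shift (of_int m * q) (B n j) - B n j * shift (of_int n * q) (Q m i)
                = smult (cLG q m i n j) (B (m + n) (i + j))"
  and z1: "\<And>m. P m 1 = 0 \<and> Q m 1 = 0 \<and> A m 1 = 0 \<and> B m 1 = 0"
  and zi: "\<And>m. P m (i - 1) = 0 \<and> Q m (i - 1) = 0 \<and> A m (i - 1) = 0 \<and> B m (i - 1) = 0"
  and i2: "i \<ge> 2" and qi: "q = - of_nat i"
  shows "P k i = 0 \<and> Q k i = 0 \<and> A k i = 0 \<and> B k i = 0"
proof -
  have ii: "1 + (i - 1) = i" using i2 by simp
  have inz: "(of_nat i :: complex) \<noteq> 0" using i2 by simp
  have LLpair: "\<exists>m n. m + n = k \<and> cLL q m 1 n (i - 1) \<noteq> 0"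
  proof (cases "k = 0")
    case True
    have "cLL q 1 1 (-1) (i - 1) = of_nat i" using qi i2 by (simp add: cLL_def of_nat_diff algebra_simps)
    then show ?thesis using True inz by (intro exI[of _ 1] exI[of _ "-1"]) simp
  next
    case False
    have "cLL q k 1 0 (i - 1) = of_int k" using qi i2 by (simp add: cLL_def of_nat_diff algebra_simps)
    then show ?thesis using False by (intro exI[of _ k] exI[of _ 0]) simp
  qed
  have LGpair: "\<exists>m n. m + n = k \<and> cLG q m 1 n (i - 1) \<noteq> 0"
  proof (cases "k = 0")
    case True
    have "cLG q 1 1 (-1) (i - 1) = of_nat i / 2" using qi i2 by (simp add: cLG_def of_nat_diff field_simps)
    then have "cLG q 1 1 (-1) (i - 1) \<noteq> 0" using inz by (metis divide_eq_0_iff zero_neq_numeral)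
    then show ?thesis using True by (intro exI[of _ 1] exI[of _ "-1"] conjI) simp_all
  next
    case False
    have "cLG q 0 1 k (i - 1) = of_int k * (1 - of_nat i)" using qi i2 by (simp add: cLG_def of_nat_diff algebra_simps)
    moreover have "(1 - of_nat i :: complex) \<noteq> 0" using i2 by simp
    ultimately show ?thesis using False by (intro exI[of _ 0] exI[of _ k]) simp
  qed
  obtain m n where mn: "m + n = k" and c1: "cLL q m 1 n (i - 1) \<noteq> 0" using LLpair by blast
  obtain m' n' where mn': "m' + n' = k" and c2: "cLG q m' 1 n' (i - 1) \<noteq> 0" using LGpair by blast
  have "P k i = 0"
    using LLe[of m 1 n "i - 1"] z1[of m] zi[of n] mn ii c1 by simp
  moreover have "Q k i = 0"
    using LLo[of m 1 n "i - 1"] z1[of m] zi[of n] mn ii c1 by simp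
  moreover have "A k i = 0"
    using LGf[of m' 1 n' "i - 1"] z1[of m'] zi[of n'] mn' ii c2 by simp
  moreover have "B k i = 0"
    using LGt[of m' 1 n' "i - 1"] z1[of m'] zi[of n'] mn' ii c2 by simp
  ultimately show ?thesis by simp
qed

lemma classI_res_one:
  fixes q l \<alpha> :: complex and P Q A B :: "int \<Rightarrow> nat \<Rightarrow> complex poly"
  assumes iq: "of_nat i + q = 0" and i1: "i \<ge> 1" and l0: "l \<noteq> 0"
  and LGf: "\<And>m i n j. Q m i * shift (of_int m * q) (A n j) - A n j * shift (of_int n * q) (P m i)
                = smult (cLG q m i n j) (A (m + n) (i + j))"
  and GGf: "\<And>m i n j. B m i * shift (of_int m * q) (A n j) + B n j * shift (of_int n * q) (A m i)
                = smult (2 * q) (P (m + n) (i + j))"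
  and P0: "\<And>m. P m 0 = smult (l powi m) [:\<alpha> * of_int m, 1:]"
  and Q0: "\<And>m. Q m 0 = smult (l powi m) [:\<alpha> * of_int m - of_int m * q / 2, 1:]"
  and A0: "\<And>m. A m 0 = [:l powi m:]"
  and B0: "\<And>m. B m 0 = smult (q * l powi m) [:2 * \<alpha> * of_int m, 1:]"
  and z2: "\<And>m. P m (i + i) = 0"
  shows "\<exists>c. \<forall>m. P m i = [:c * l powi m:] \<and> Q m i = [:c * l powi m:] \<and> A m i = 0
             \<and> B m i = [:2 * q * c * l powi m:]"
proof -
  have qi: "q = - of_nat i" using iq by algebra
  have inz: "(of_nat i :: complex) \<noteq> 0" using i1 by simp
  have q: "q \<noteq> 0" using qi inz by simp
  have iq2: "of_nat i + q / 2 \<noteq> 0"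
  proof -
    have "of_nat i + q / 2 = of_nat i / 2" using qi by simp
    then show ?thesis using inz by (metis divide_eq_0_iff zero_neq_numeral)
  qed
  define R where "R = P 0 i"
  define S where "S = A 0 i"
  have Q0i: "Q 0 i = R"
    using LGf[of 0 i 0 0] A0[of 0] by (simp add: cLG_def R_def)
  have Qm: "Q m i = P m i - smult (of_int m * q / 2) (A m i)" for m
    using LGf[of m i 0 0] A0[of 0] by (simp add: cLG_def algebra_simps)
  have Bm: "B m i = smult (2 * q) (P m i) - [:0, q:] * A m i" for m
    using GGf[of m i 0 0] A0[of 0] B0[of 0] by (simp add: algebra_simps)
  have H0x: "l powi n * (poly R x - poly R (x - of_int n * q)) = 0" for n x
    using arg_cong[OF LGf[of 0 i n 0], of "\<lambda>p. poly p x"] Q0i A0[of n] qi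
    by (simp add: cLG_def R_def algebra_simps)
  have S0x: "l powi n * (x + \<alpha> * of_int n - of_int n * q / 2) * poly S (x - of_int n * q) - poly S x * (l powi n * (x + \<alpha> * of_int n))
      = - (of_int n * (of_nat i + q / 2)) * poly (A n i) x" for n x
    using arg_cong[OF LGf[of n 0 0 i], of "\<lambda>p. poly p x"] P0[of n] Q0[of n]
    by (simp add: cLG_def S_def algebra_simps)
  have B0i: "B 0 i = smult (2 * q) R - [:0, q:] * S" using Bm[of 0] R_def S_def by simp
  have F0x: "(2 * q * poly R x - q * x * poly S x) * l powi n + q * l powi n * (x + 2 * \<alpha> * of_int n) * poly S (x - of_int n * q)
      = 2 * q * poly (P n i) x" for n x
  proof -
    have B0ix: "poly (B 0 i) x = 2 * q * poly R x - q * x * poly S x" using B0i by simp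
    show ?thesis
      using arg_cong[OF GGf[of 0 i n 0], of "\<lambda>p. poly p x"] A0[of n] B0[of n] B0ix
      by (simp add: S_def algebra_simps)
  qed
  have "shift q R = R"
  proof -
    have "poly R (x - q) = poly R x" for x using H0x[of 1 x] l0 by simp
    then show ?thesis by (simp add: poly_ext_iff)
  qed
  from periodic_const[OF q this] obtain c where Rc: "R = [:c:]" by blast
  have S0: "S = 0"
  proof (rule ccontr)
    assume Snz: "S \<noteq> 0"
    have "B 0 i * shift (of_int 0 * q) (A 0 i) + B 0 i * shift (of_int 0 * q) (A 0 i) = smult (2 * q) (P (0 + 0) (i + i))"
      by (rule GGf)
    then have "B 0 i * S = 0" using z2[of 0] by (auto simp: S_def)
    then have "B 0 i = 0" using Snz by simp
    then have "[:0, q:] * S = [:2 * q * c:]" using B0i Rc by simp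
    then have "degree ([:0, q:] * S) = 0" by simp
    moreover have "degree ([:0, q:] * S) = 1 + degree S" using Snz q by (simp add: degree_mult_eq)
    ultimately show False by simp
  qed
  have An: "A n i = 0" for n
  proof (cases "n = 0")
    case True then show ?thesis using S0 S_def by simp
  next
    case False
    have "poly (A n i) x = 0" for x using S0x[of n x] S0 False iq2 by simp
    then show ?thesis by (simp add: poly_ext_iff)
  qed
  have Pn: "P n i = [:c * l powi n:]" for n
  proof -
    have "poly (P n i) x = c * l powi n" for x using F0x[of x n] S0 Rc q by simp
    then show ?thesis by (simp add: poly_ext_iff)
  qed
  show ?thesis
    by (intro exI[of _ c] allI conjI) (simp_all add: Pn An Qm Bm algebra_simps)
qed

definition OmP :: "complex \<Rightarrow> complex \<Rightarrow> complex \<Rightarrow> complex \<Rightarrow> int \<Rightarrow> nat \<Rightarrow> complex poly" where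
  "OmP q lam a b m i = smult (lam powi m)
          (smult (kd (i = 0)) [:- (of_int m * q * a), 1:] + [: kd (q = -1) * kd (i = 1) * b :])"
definition OmQ :: "complex \<Rightarrow> complex \<Rightarrow> complex \<Rightarrow> complex \<Rightarrow> int \<Rightarrow> nat \<Rightarrow> complex poly" where
  "OmQ q lam a b m i = smult (lam powi m)
          (smult (kd (i = 0)) [:- (of_int m * q * a) - of_int m * q / 2, 1:] + [: kd (q = -1) * kd (i = 1) * b :])"
definition OmB :: "complex \<Rightarrow> complex \<Rightarrow> complex \<Rightarrow> complex \<Rightarrow> int \<Rightarrow> nat \<Rightarrow> complex poly" where
  "OmB q lam a b m i = smult (q * lam powi m)
          (smult (kd (i = 0)) [:- (2 * of_int m * q * a), 1:] + [: 2 * kd (q = -1) * kd (i = 1) * b :])"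
definition OmA :: "complex \<Rightarrow> complex \<Rightarrow> complex \<Rightarrow> complex \<Rightarrow> int \<Rightarrow> nat \<Rightarrow> complex poly" where
  "OmA q lam a b m i = [: lam powi m * kd (i = 0) :]"

lemma classify:
  fixes q :: complex and P Q A B :: "int \<Rightarrow> nat \<Rightarrow> complex poly"
  assumes q: "q \<noteq> 0"
  and LLe: "\<And>m i n j. P m i * shift (of_int m * q) (P n j) - P n j * shift (of_int n * q) (P m i)
                = smult (cLL q m i n j) (P (m + n) (i + j))"
  and LLo: "\<And>m i n j. Q m i * shift (of_int m * q) (Q n j) - Q n j * shift (of_int n * q) (Q m i)
                = smult (cLL q m i n j) (Q (m + n) (i + j))"
  and LGf: "\<And>m i n j. Q m i * shift (of_int m * q) (A n j) - A n j * shift (of_int n * q) (P m i)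
                = smult (cLG q m i n j) (A (m + n) (i + j))"
  and LGt: "\<And>m i n j. P m i * shift (of_int m * q) (B n j) - B n j * shift (of_int n * q) (Q m i)
                = smult (cLG q m i n j) (B (m + n) (i + j))"
  and GGf: "\<And>m i n j. B m i * shift (of_int m * q) (A n j) + B n j * shift (of_int n * q) (A m i)
                = smult (2 * q) (P (m + n) (i + j))"
  and P00: "P 0 0 = [:0, 1:]" and Q00: "Q 0 0 = [:0, 1:]" and A00: "A 0 0 = 1" and B00: "B 0 0 = [:0, q:]"
  shows "\<exists>l a b. l \<noteq> 0 \<and> (q \<noteq> -1 \<longrightarrow> b = 0) \<and>
          (\<forall>m i. P m i = OmP q l a b m i \<and> Q m i = OmQ q l a b m i \<and> A m i = OmA q l a b m i \<and> B m i = OmB q l a b m i)"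
proof -
  obtain l \<alpha> where l0: "l \<noteq> 0"
    and P0: "\<And>m. P m 0 = smult (l powi m) [:\<alpha> * of_int m, 1:]"
    and Q0: "\<And>m. Q m 0 = smult (l powi m) [:\<alpha> * of_int m - of_int m * q / 2, 1:]"
    and A0: "\<And>m. A m 0 = [:l powi m:]"
    and B0: "\<And>m. B m 0 = smult (q * l powi m) [:2 * \<alpha> * of_int m, 1:]"
    using class0[OF q LLe LLo LGf GGf P00 Q00 A00 B00] by blast
  have nonres: "P m i = 0 \<and> Q m i = 0 \<and> A m i = 0 \<and> B m i = 0" if "i \<ge> 1" "of_nat i + q \<noteq> 0" for m i
    by (rule classI_nonres[OF q l0 LLe LGf GGf P0 Q0 A0 B0 that])
  define a where "a = - \<alpha> / q"
  have aa: "- (of_int m * q * a) = \<alpha> * of_int m" for m using q by (simp add: a_def)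
  have lev0: "P m 0 = OmP q l a b m 0 \<and> Q m 0 = OmQ q l a b m 0 \<and> A m 0 = OmA q l a b m 0 \<and> B m 0 = OmB q l a b m 0" for m b
    using P0[of m] Q0[of m] A0[of m] B0[of m] q
    by (simp add: OmP_def OmQ_def OmA_def OmB_def kd_def a_def field_simps)
  have levz: "P m i = OmP q l a b m i \<and> Q m i = OmQ q l a b m i \<and> A m i = OmA q l a b m i \<and> B m i = OmB q l a b m i"
    if "i \<ge> 1" "P m i = 0 \<and> Q m i = 0 \<and> A m i = 0 \<and> B m i = 0" "q \<noteq> -1 \<or> i \<noteq> 1" for m i b
    using that by (auto simp: OmP_def OmQ_def OmA_def OmB_def kd_def)
  show ?thesis
  proof (cases "q = -1")
    case False
    have allz: "P m i = 0 \<and> Q m i = 0 \<and> A m i = 0 \<and> B m i = 0" if "i \<ge> 1" for m i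
    proof (cases "of_nat i + q = 0")
      case False then show ?thesis using nonres that by blast
    next
      case True
      have qi: "q = - of_nat i" using True by algebra
      have i2: "i \<ge> 2" using that qi \<open>q \<noteq> -1\<close> by (cases "i = 1") auto
      have z1: "P m 1 = 0 \<and> Q m 1 = 0 \<and> A m 1 = 0 \<and> B m 1 = 0" for m
        using nonres[of 1 m] qi i2 by simp
      have zi: "P m (i - 1) = 0 \<and> Q m (i - 1) = 0 \<and> A m (i - 1) = 0 \<and> B m (i - 1) = 0" for m
        using nonres[of "i - 1" m] qi i2 by (simp add: of_nat_diff)
      show ?thesis by (rule classI_res_high[OF LLe LLo LGf LGt z1 zi i2 qi])
    qed
    show ?thesis
    proof (intro exI conjI allI impI)
      show "l \<noteq> 0" by (rule l0)
      show "(0::complex) = 0" by simp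
      fix m i
      show "P m i = OmP q l a 0 m i" "Q m i = OmQ q l a 0 m i" "A m i = OmA q l a 0 m i" "B m i = OmB q l a 0 m i"
        using lev0[of m 0] levz[of i m 0] allz[of i m] False by (cases "i = 0"; simp)+
    qed
  next
    case True
    have iq1: "of_nat 1 + q = 0" using True by simp
    have z2: "P m (1 + 1) = 0" for m using nonres[of 2 m] True by (simp add: numeral_2_eq_2)
    obtain c where c: "\<And>m. P m 1 = [:c * l powi m:] \<and> Q m 1 = [:c * l powi m:] \<and> A m 1 = 0
             \<and> B m 1 = [:2 * q * c * l powi m:]"
      using classI_res_one[OF iq1 _ l0 LGf GGf P0 Q0 A0 B0 z2] by auto
    show ?thesis
    proof (intro exI conjI allI impI)
      show "l \<noteq> 0" by (rule l0)
      show "q \<noteq> -1 \<Longrightarrow> c = 0" using True by simp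
      fix m i
      have "P m i = OmP q l a c m i \<and> Q m i = OmQ q l a c m i \<and> A m i = OmA q l a c m i \<and> B m i = OmB q l a c m i"
      proof (cases "i = 0")
        case True then show ?thesis using lev0 by simp
      next
        case False
        show ?thesis
        proof (cases "i = 1")
          case True then show ?thesis using c[of m] \<open>q = -1\<close> by (simp add: OmP_def OmQ_def OmA_def OmB_def kd_def algebra_simps)
        next
          case False
          then have "i \<ge> 1" "of_nat i + q \<noteq> 0" using \<open>i \<noteq> 0\<close> \<open>q = -1\<close> by auto
          then show ?thesis using levz[of i m c] nonres[of i m] False by simp
        qed
      qed
      then show "P m i = OmP q l a c m i" "Q m i = OmQ q l a c m i" "A m i = OmA q l a c m i" "B m i = OmB q l a c m i"
        by simp_all
    qed
  qed
qed

lemma cvs_add_right: "cvs smul \<Longrightarrow> smul c (x + y) = smul c x + smul c y" by (simp add: cvs_def)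
lemma cvs_add_left: "cvs smul \<Longrightarrow> smul (c + d) x = smul c x + smul d x" by (simp add: cvs_def)
lemma cvs_assoc: "cvs smul \<Longrightarrow> smul c (smul d x) = smul (c * d) x" by (simp add: cvs_def)
lemma cvs_one: "cvs smul \<Longrightarrow> smul 1 x = x" by (simp add: cvs_def)

lemma cvs_zero_left: assumes "cvs smul" shows "smul 0 x = 0"
proof -
  have "smul (0 + 0) x = smul 0 x + smul 0 x" by (rule cvs_add_left[OF assms])
  then show ?thesis by simp
qed
lemma cvs_zero_right: assumes "cvs smul" shows "smul c 0 = 0"
proof -
  have "smul c (0 + 0) = smul c 0 + smul c 0" by (rule cvs_add_right[OF assms])
  then show ?thesis by simp
qed
lemma cvs_neg_right: assumes "cvs smul" shows "smul c (- x) = - smul c x"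
proof -
  have "smul c (x + - x) = smul c x + smul c (- x)" by (rule cvs_add_right[OF assms])
  then show ?thesis using cvs_zero_right[OF assms] by (simp add: eq_neg_iff_add_eq_0 add.commute)
qed
lemma cvs_diff_right: assumes "cvs smul" shows "smul c (x - y) = smul c x - smul c y"
  using cvs_add_right[OF assms, of c x "- y"] cvs_neg_right[OF assms] by simp
lemma cvs_neg_left: assumes "cvs smul" shows "smul (- c) x = - smul c x"
proof -
  have "smul (c + - c) x = smul c x + smul (- c) x" by (rule cvs_add_left[OF assms])
  then show ?thesis using cvs_zero_left[OF assms] by (simp add: eq_neg_iff_add_eq_0 add.commute)
qed
lemma cvs_diff_left: assumes "cvs smul" shows "smul (c - d) x = smul c x - smul d x"
  using cvs_add_left[OF assms, of c "- d" x] cvs_neg_left[OF assms] by simp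
lemma cvs_sum: assumes "cvs smul" shows "smul c (sum f S) = (\<Sum>k\<in>S. smul c (f k))"
  by (induction S rule: infinite_finite_induct) (simp_all add: cvs_zero_right[OF assms] cvs_add_right[OF assms])

lemma lin_add: "clinear_map smul smul' F \<Longrightarrow> F (x + y) = F x + F y" by (simp add: clinear_map_def)
lemma lin_smul: "clinear_map smul smul' F \<Longrightarrow> F (smul c x) = smul' c (F x)" by (simp add: clinear_map_def)
lemma lin_zero: assumes "clinear_map smul smul' F" shows "F 0 = 0"
proof -
  have "F (0 + 0) = F 0 + F 0" by (rule lin_add[OF assms])
  then show ?thesis by simp
qed
lemma lin_neg: assumes "clinear_map smul smul' F" shows "F (- x) = - F x"
proof -
  have "F (x + - x) = F x + F (- x)" by (rule lin_add[OF assms])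
  then show ?thesis using lin_zero[OF assms] by (simp add: eq_neg_iff_add_eq_0 add.commute)
qed
lemma lin_diff: assumes "clinear_map smul smul' F" shows "F (x - y) = F x - F y"
  using lin_add[OF assms, of x "- y"] lin_neg[OF assms] by simp
lemma lin_sum: assumes "clinear_map smul smul' F" shows "F (sum f S) = (\<Sum>k\<in>S. F (f k))"
  by (induction S rule: infinite_finite_induct) (simp_all add: lin_zero[OF assms] lin_add[OF assms])

section \<open>Polynomials evaluated at an operator\<close>

definition opoly :: "(complex \<Rightarrow> 'v \<Rightarrow> 'v) \<Rightarrow> ('v \<Rightarrow> 'v) \<Rightarrow> complex poly \<Rightarrow> 'v \<Rightarrow> 'v::ab_group_add" where
  "opoly smul T p w = (\<Sum>k\<le>degree p. smul (coeff p k) ((T ^^ k) w))"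

lemma opoly_bound:
  assumes cvs: "cvs smul" and N: "degree p \<le> N"
  shows "opoly smul T p w = (\<Sum>k\<le>N. smul (coeff p k) ((T ^^ k) w))"
  unfolding opoly_def
proof (rule sum.mono_neutral_left)
  show "finite {..N}" by simp
  show "{..degree p} \<subseteq> {..N}" using N by auto
  show "\<forall>i\<in>{..N} - {..degree p}. smul (coeff p i) ((T ^^ i) w) = 0"
    by (auto simp: coeff_eq_0 cvs_zero_left[OF cvs])
qed

lemma opoly_add:
  assumes cvs: "cvs smul"
  shows "opoly smul T (p + r) w = opoly smul T p w + opoly smul T r w"
proof -
  define N where "N = max (degree p) (degree r)"
  have "degree (p + r) \<le> N" by (simp add: N_def degree_add_le)
  then have "opoly smul T (p + r) w = (\<Sum>k\<le>N. smul (coeff (p + r) k) ((T ^^ k) w))" by (rule opoly_bound[OF cvs])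
  also have "\<dots> = (\<Sum>k\<le>N. smul (coeff p k) ((T ^^ k) w)) + (\<Sum>k\<le>N. smul (coeff r k) ((T ^^ k) w))"
    by (simp add: cvs_add_left[OF cvs] sum.distrib)
  also have "\<dots> = opoly smul T p w + opoly smul T r w"
    using opoly_bound[OF cvs, of p N] opoly_bound[OF cvs, of r N] by (simp add: N_def)
  finally show ?thesis .
qed

lemma opoly_smult:
  assumes cvs: "cvs smul"
  shows "opoly smul T (smult c p) w = smul c (opoly smul T p w)"
proof -
  have "opoly smul T (smult c p) w = (\<Sum>k\<le>degree p. smul (coeff (smult c p) k) ((T ^^ k) w))"
    by (rule opoly_bound[OF cvs]) (simp add: degree_smult_le)
  also have "\<dots> = smul c (opoly smul T p w)"
    by (simp add: opoly_def cvs_sum[OF cvs] cvs_assoc[OF cvs])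
  finally show ?thesis .
qed

lemma opoly_zero: "opoly smul T 0 w = smul 0 w" by (simp add: opoly_def)
lemma opoly_zero': "cvs smul \<Longrightarrow> opoly smul T 0 w = 0" by (simp add: opoly_def cvs_zero_left)
lemma opoly_const: "opoly smul T [:a:] w = smul a w" by (simp add: opoly_def)

lemma opoly_neg:
  assumes cvs: "cvs smul" shows "opoly smul T (- p) w = - opoly smul T p w"
  using opoly_smult[OF cvs, of T "-1" p w] cvs_neg_left[OF cvs] cvs_one[OF cvs] by simp

lemma opoly_diff:
  assumes cvs: "cvs smul" shows "opoly smul T (p - r) w = opoly smul T p w - opoly smul T r w"
  using opoly_add[OF cvs, of T p "- r" w] opoly_neg[OF cvs] by simp

lemma opoly_pCons:
  assumes cvs: "cvs smul" and lin: "clinear_map smul smul T"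
  shows "opoly smul T (pCons a p) w = smul a w + T (opoly smul T p w)"
proof -
  define N where "N = degree p"
  have "opoly smul T (pCons a p) w = (\<Sum>k\<le>Suc N. smul (coeff (pCons a p) k) ((T ^^ k) w))"
    by (rule opoly_bound[OF cvs]) (simp add: N_def degree_pCons_le)
  also have "\<dots> = smul a w + (\<Sum>k\<le>N. smul (coeff p k) ((T ^^ Suc k) w))"
    by (subst sum.atMost_Suc_shift) (simp del: funpow.simps sum.atMost_Suc)
  also have "(\<Sum>k\<le>N. smul (coeff p k) ((T ^^ Suc k) w)) = T (opoly smul T p w)"
    by (simp add: opoly_def N_def lin_sum[OF lin] lin_smul[OF lin])
  finally show ?thesis .
qed

lemma opoly_mult:
  assumes cvs: "cvs smul" and lin: "clinear_map smul smul T"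
  shows "opoly smul T (p * r) w = opoly smul T p (opoly smul T r w)"
proof (induction p)
  case 0 then show ?case by (simp add: opoly_zero' cvs)
next
  case (pCons a p)
  have "opoly smul T (pCons a p * r) w = opoly smul T (smult a r + pCons 0 (p * r)) w"
    by (simp add: mult_pCons_left)
  also have "\<dots> = smul a (opoly smul T r w) + T (opoly smul T (p * r) w)"
    by (simp add: opoly_add[OF cvs] opoly_smult[OF cvs] opoly_pCons[OF cvs lin] cvs_zero_left[OF cvs])
  also have "\<dots> = opoly smul T (pCons a p) (opoly smul T r w)"
    using pCons.IH by (simp add: opoly_pCons[OF cvs lin])
  finally show ?case .
qed

lemma opoly_comm:
  assumes cvs: "cvs smul" and lin: "clinear_map smul smul T" and linF: "clinear_map smul smul F"
  and comm: "\<And>y. F (T y) = T (F y) - smul c (F y)"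
  shows "F (opoly smul T p w) = opoly smul T (shift c p) (F w)"
proof (induction p)
  case 0 then show ?case by (simp add: opoly_zero' cvs lin_zero[OF linF])
next
  case (pCons a p)
  have sh: "shift c (pCons a p) = [:a:] + pCons 0 (shift c p) - smult c (shift c p)"
    by (simp add: poly_ext_iff algebra_simps)
  have "F (opoly smul T (pCons a p) w) = smul a (F w) + F (T (opoly smul T p w))"
    by (simp add: opoly_pCons[OF cvs lin] lin_add[OF linF] lin_smul[OF linF])
  also have "\<dots> = smul a (F w) + T (opoly smul T (shift c p) (F w)) - smul c (opoly smul T (shift c p) (F w))"
    using pCons.IH comm by simp
  also have "\<dots> = opoly smul T (shift c (pCons a p)) (F w)"
    unfolding sh by (simp add: opoly_add[OF cvs] opoly_diff[OF cvs] opoly_smult[OF cvs] opoly_const opoly_pCons[OF cvs lin] cvs_zero_left[OF cvs])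
  finally show ?case .
qed

lemma opoly_in:
  assumes cvs: "cvs smul" and sub: "subspace_of smul W" and w: "w \<in> W" and TW: "\<And>x. x \<in> W \<Longrightarrow> T x \<in> W"
  shows "opoly smul T p w \<in> W"
proof -
  have Tk: "(T ^^ k) w \<in> W" for k by (induction k) (simp_all add: w TW)
  have "(\<Sum>k\<in>S. smul (coeff p k) ((T ^^ k) w)) \<in> W" for S :: "nat set"
  proof (induction S rule: infinite_finite_induct)
    case (infinite A) then show ?case using sub by (simp add: subspace_of_def)
  next
    case empty then show ?case using sub by (simp add: subspace_of_def)
  next
    case (insert x F) then show ?case using sub Tk by (simp add: subspace_of_def)
  qed
  then show ?thesis by (simp add: opoly_def)
qed

definition oact :: "complex \<Rightarrow> (int \<Rightarrow> nat \<Rightarrow> complex poly) \<Rightarrow> (int \<Rightarrow> nat \<Rightarrow> complex poly)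
   \<Rightarrow> (int \<Rightarrow> nat \<Rightarrow> complex poly) \<Rightarrow> (int \<Rightarrow> nat \<Rightarrow> complex poly) \<Rightarrow> rb_basis \<Rightarrow> omega \<Rightarrow> omega" where
  "oact q P Q A B x v = (case x of
      L m i \<Rightarrow> (P m i * shift (of_int m * q) (fst v), Q m i * shift (of_int m * q) (snd v))
    | G m i \<Rightarrow> (B m i * shift (of_int m * q) (snd v), A m i * shift (of_int m * q) (fst v)))"

lemma oact_L[simp]: "oact q P Q A B (L m i) v = (P m i * shift (of_int m * q) (fst v), Q m i * shift (of_int m * q) (snd v))"
  by (simp add: oact_def)
lemma oact_G[simp]: "oact q P Q A B (G m i) v = (B m i * shift (of_int m * q) (snd v), A m i * shift (of_int m * q) (fst v))"
  by (simp add: oact_def)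

lemma Omega_act_oact: "Omega_act q l a b = oact q (OmP q l a b) (OmQ q l a b) (OmA q l a b) (OmB q l a b)"
proof (intro ext)
  fix x v show "Omega_act q l a b x v = oact q (OmP q l a b) (OmQ q l a b) (OmA q l a b) (OmB q l a b) x v"
    by (cases x) (simp_all add: Omega_act_def oact_def OmP_def OmQ_def OmA_def OmB_def)
qed

lemma sh_comp: "X * shift (of_int m * q) (Y * shift (of_int n * q) f)
   = (X * shift (of_int m * q) Y) * shift (of_int (m + n) * q) (f :: complex poly)"
  by (simp add: shift_mult shift_shift algebra_simps)

lemma cvs_Omega: "cvs Omega_smul"
  by (simp add: cvs_def Omega_smul_def smult_add_right smult_add_left)

lemma super_vs_Omega: "super_vs Omega_smul Omega_even Omega_odd"
  unfolding super_vs_def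
proof (intro conjI)
  show "cvs Omega_smul" by (rule cvs_Omega)
  show "subspace_of Omega_smul Omega_even" by (simp add: subspace_of_def Omega_even_def Omega_smul_def)
  show "subspace_of Omega_smul Omega_odd" by (simp add: subspace_of_def Omega_odd_def Omega_smul_def)
  show "Omega_even \<inter> Omega_odd = {0}" by (auto simp: Omega_even_def Omega_odd_def prod_eq_iff)
  show "\<forall>x. \<exists>x0\<in>Omega_even. \<exists>x1\<in>Omega_odd. x = x0 + x1"
  proof
    fix x :: omega
    show "\<exists>x0\<in>Omega_even. \<exists>x1\<in>Omega_odd. x = x0 + x1"
      by (rule bexI[of _ "(fst x, 0)"], rule bexI[of _ "(0, snd x)"]) (auto simp: Omega_even_def Omega_odd_def prod_eq_iff)
  qed
qed

lemma R_module_oact: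
  fixes q :: complex and P Q A B :: "int \<Rightarrow> nat \<Rightarrow> complex poly"
  assumes LLe: "\<And>m i n j. P m i * shift (of_int m * q) (P n j) - P n j * shift (of_int n * q) (P m i)
                = smult (cLL q m i n j) (P (m + n) (i + j))"
  and LLo: "\<And>m i n j. Q m i * shift (of_int m * q) (Q n j) - Q n j * shift (of_int n * q) (Q m i)
                = smult (cLL q m i n j) (Q (m + n) (i + j))"
  and LGf: "\<And>m i n j. Q m i * shift (of_int m * q) (A n j) - A n j * shift (of_int n * q) (P m i)
                = smult (cLG q m i n j) (A (m + n) (i + j))"
  and LGt: "\<And>m i n j. P m i * shift (of_int m * q) (B n j) - B n j * shift (of_int n * q) (Q m i)
                = smult (cLG q m i n j) (B (m + n) (i + j))"
  and GGf: "\<And>m i n j. B m i * shift (of_int m * q) (A n j) + B n j * shift (of_int n * q) (A m i)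
                = smult (2 * q) (P (m + n) (i + j))"
  and GGt: "\<And>m i n j. A m i * shift (of_int m * q) (B n j) + A n j * shift (of_int n * q) (B m i)
                = smult (2 * q) (Q (m + n) (i + j))"
  shows "R_module q Omega_smul Omega_even Omega_odd (oact q P Q A B)"
  unfolding R_module_def
proof (intro conjI allI)
  show "super_vs Omega_smul Omega_even Omega_odd" by (rule super_vs_Omega)
  fix x
  show "clinear_map Omega_smul Omega_smul (oact q P Q A B x)"
    by (cases x) (simp_all add: clinear_map_def Omega_smul_def shift_add shift_smult algebra_simps)
next
  fix m i
  show "oact q P Q A B (L m i) ` Omega_even \<subseteq> Omega_even" "oact q P Q A B (L m i) ` Omega_odd \<subseteq> Omega_odd"
    "oact q P Q A B (G m i) ` Omega_even \<subseteq> Omega_odd" "oact q P Q A B (G m i) ` Omega_odd \<subseteq> Omega_even"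
    by (auto simp: Omega_even_def Omega_odd_def)
next
  fix m i n j v
  let ?S = "\<lambda>f. shift (of_int (m + n) * q) (f :: complex poly)"
  have nm: "of_int (n + m) * q = of_int (m + n) * (q :: complex)" by (simp add: add.commute)
  have nm': "(of_int n + of_int m) * q = (of_int m + of_int n) * (q :: complex)" by (simp add: add.commute)
  have nm'': "of_int n * q + of_int m * q = of_int m * q + of_int n * (q :: complex)" by (simp add: add.commute)
  show "oact q P Q A B (L m i) (oact q P Q A B (L n j) v) - oact q P Q A B (L n j) (oact q P Q A B (L m i) v)
      = Omega_smul (cLL q m i n j) (oact q P Q A B (L (m + n) (i + j)) v)"
  proof -
    have "fst (oact q P Q A B (L m i) (oact q P Q A B (L n j) v) - oact q P Q A B (L n j) (oact q P Q A B (L m i) v))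
      = (P m i * shift (of_int m * q) (P n j) - P n j * shift (of_int n * q) (P m i)) * ?S (fst v)"
      by (simp add: sh_comp nm nm' nm'' left_diff_distrib)
    moreover have "snd (oact q P Q A B (L m i) (oact q P Q A B (L n j) v) - oact q P Q A B (L n j) (oact q P Q A B (L m i) v))
      = (Q m i * shift (of_int m * q) (Q n j) - Q n j * shift (of_int n * q) (Q m i)) * ?S (snd v)"
      by (simp add: sh_comp nm nm' nm'' left_diff_distrib)
    ultimately show ?thesis by (simp add: LLe LLo prod_eq_iff Omega_smul_def)
  qed
  show "oact q P Q A B (L m i) (oact q P Q A B (G n j) v) - oact q P Q A B (G n j) (oact q P Q A B (L m i) v)
      = Omega_smul (cLG q m i n j) (oact q P Q A B (G (m + n) (i + j)) v)"
  proof -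
    have "fst (oact q P Q A B (L m i) (oact q P Q A B (G n j) v) - oact q P Q A B (G n j) (oact q P Q A B (L m i) v))
      = (P m i * shift (of_int m * q) (B n j) - B n j * shift (of_int n * q) (Q m i)) * ?S (snd v)"
      by (simp add: sh_comp nm nm' nm'' left_diff_distrib)
    moreover have "snd (oact q P Q A B (L m i) (oact q P Q A B (G n j) v) - oact q P Q A B (G n j) (oact q P Q A B (L m i) v))
      = (Q m i * shift (of_int m * q) (A n j) - A n j * shift (of_int n * q) (P m i)) * ?S (fst v)"
      by (simp add: sh_comp nm nm' nm'' left_diff_distrib)
    ultimately show ?thesis by (simp add: LGf LGt prod_eq_iff Omega_smul_def)
  qed
  show "oact q P Q A B (G m i) (oact q P Q A B (G n j) v) + oact q P Q A B (G n j) (oact q P Q A B (G m i) v)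
      = Omega_smul (2 * q) (oact q P Q A B (L (m + n) (i + j)) v)"
  proof -
    have "fst (oact q P Q A B (G m i) (oact q P Q A B (G n j) v) + oact q P Q A B (G n j) (oact q P Q A B (G m i) v))
      = (B m i * shift (of_int m * q) (A n j) + B n j * shift (of_int n * q) (A m i)) * ?S (fst v)"
      by (simp add: sh_comp nm nm' nm'' distrib_right)
    moreover have "snd (oact q P Q A B (G m i) (oact q P Q A B (G n j) v) + oact q P Q A B (G n j) (oact q P Q A B (G m i) v))
      = (A m i * shift (of_int m * q) (B n j) + A n j * shift (of_int n * q) (B m i)) * ?S (snd v)"
      by (simp add: sh_comp nm nm' nm'' distrib_right)
    ultimately show ?thesis by (simp add: GGf GGt prod_eq_iff Omega_smul_def)
  qed
qed

lemma Om_LLe: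
  assumes l0: "l \<noteq> 0" and qb: "q \<noteq> -1 \<longrightarrow> b = 0"
  shows "OmP q l a b m i * shift (of_int m * q) (OmP q l a b n j) - OmP q l a b n j * shift (of_int n * q) (OmP q l a b m i)
                = smult (cLL q m i n j) (OmP q l a b (m + n) (i + j))"
  unfolding poly_ext_iff
  using l0 qb
  by (cases "i = 0"; cases "i = 1"; cases "j = 0"; cases "j = 1"; cases "q = -1")
     (simp_all add: OmP_def cLL_def kd_def power_int_add algebra_simps)

lemma Om_LLo:
  assumes l0: "l \<noteq> 0" and qb: "q \<noteq> -1 \<longrightarrow> b = 0"
  shows "OmQ q l a b m i * shift (of_int m * q) (OmQ q l a b n j) - OmQ q l a b n j * shift (of_int n * q) (OmQ q l a b m i)
                = smult (cLL q m i n j) (OmQ q l a b (m + n) (i + j))"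
  unfolding poly_ext_iff
  using l0 qb
  by (cases "i = 0"; cases "i = 1"; cases "j = 0"; cases "j = 1"; cases "q = -1")
     (simp_all add: OmQ_def cLL_def kd_def power_int_add field_simps)

lemma Om_LGf:
  assumes l0: "l \<noteq> 0" and qb: "q \<noteq> -1 \<longrightarrow> b = 0"
  shows "OmQ q l a b m i * shift (of_int m * q) (OmA q l a b n j) - OmA q l a b n j * shift (of_int n * q) (OmP q l a b m i)
                = smult (cLG q m i n j) (OmA q l a b (m + n) (i + j))"
  unfolding poly_ext_iff
  using l0 qb
  by (cases "i = 0"; cases "i = 1"; cases "j = 0"; cases "j = 1"; cases "q = -1")
     (simp_all add: OmP_def OmQ_def OmA_def cLG_def kd_def power_int_add algebra_simps)

lemma Om_LGt:
  assumes l0: "l \<noteq> 0" and qb: "q \<noteq> -1 \<longrightarrow> b = 0"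
  shows "OmP q l a b m i * shift (of_int m * q) (OmB q l a b n j) - OmB q l a b n j * shift (of_int n * q) (OmQ q l a b m i)
                = smult (cLG q m i n j) (OmB q l a b (m + n) (i + j))"
  unfolding poly_ext_iff
  using l0 qb
  by (cases "i = 0"; cases "i = 1"; cases "j = 0"; cases "j = 1"; cases "q = -1")
     (simp_all add: OmP_def OmQ_def OmB_def cLG_def kd_def power_int_add algebra_simps)

lemma Om_GGf:
  assumes l0: "l \<noteq> 0" and qb: "q \<noteq> -1 \<longrightarrow> b = 0"
  shows "OmB q l a b m i * shift (of_int m * q) (OmA q l a b n j) + OmB q l a b n j * shift (of_int n * q) (OmA q l a b m i)
                = smult (2 * q) (OmP q l a b (m + n) (i + j))"
  unfolding poly_ext_iff
  using l0 qb
  by (cases "i = 0"; cases "i = 1"; cases "j = 0"; cases "j = 1"; cases "q = -1")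
     (simp_all add: OmP_def OmA_def OmB_def kd_def power_int_add algebra_simps)

lemma Om_GGt:
  assumes l0: "l \<noteq> 0" and qb: "q \<noteq> -1 \<longrightarrow> b = 0"
  shows "OmA q l a b m i * shift (of_int m * q) (OmB q l a b n j) + OmA q l a b n j * shift (of_int n * q) (OmB q l a b m i)
                = smult (2 * q) (OmQ q l a b (m + n) (i + j))"
  unfolding poly_ext_iff
  using l0 qb
  by (cases "i = 0"; cases "i = 1"; cases "j = 0"; cases "j = 1"; cases "q = -1")
     (simp_all add: OmQ_def OmA_def OmB_def kd_def power_int_add algebra_simps)

lemma part1:
  assumes l0: "l \<noteq> 0" and qb: "q \<noteq> -1 \<longrightarrow> b = 0"
  shows "R_module q Omega_smul Omega_even Omega_odd (Omega_act q l a b)"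
  unfolding Omega_act_oact
  by (rule R_module_oact[OF Om_LLe[OF l0 qb] Om_LLo[OF l0 qb] Om_LGf[OF l0 qb] Om_LGt[OF l0 qb] Om_GGf[OF l0 qb] Om_GGt[OF l0 qb]])

definition Phi :: "(complex \<Rightarrow> 'v \<Rightarrow> 'v) \<Rightarrow> ('v \<Rightarrow> 'v) \<Rightarrow> 'v \<Rightarrow> 'v \<Rightarrow> omega \<Rightarrow> 'v::ab_group_add" where
  "Phi smul T v v' w = opoly smul T (fst w) v + opoly smul T (snd w) v'"

definition cw :: "omega \<Rightarrow> nat \<times> bool \<Rightarrow> complex" where
  "cw w = (\<lambda>(k, b). coeff (if b then snd w else fst w) k)"

lemma Phi_as_sum:
  assumes cvs: "cvs smul" and N1: "degree (fst w) \<le> N" and N2: "degree (snd w) \<le> N"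
  shows "Phi smul T v v' w = (\<Sum>i\<in>{..N} \<times> UNIV. smul (cw w i) ((\<lambda>(k, e). (T ^^ k) (if e then v' else v)) i))"
proof -
  have "(\<Sum>i\<in>{..N} \<times> UNIV. smul (cw w i) ((\<lambda>(k, e). (T ^^ k) (if e then v' else v)) i))
      = (\<Sum>k\<le>N. \<Sum>b\<in>UNIV. smul (cw w (k, b)) ((T ^^ k) (if b then v' else v)))"
    by (simp add: sum.cartesian_product')
  also have "\<dots> = (\<Sum>k\<le>N. smul (coeff (fst w) k) ((T ^^ k) v) + smul (coeff (snd w) k) ((T ^^ k) v'))"
    by (simp add: UNIV_bool cw_def add.commute)
  also have "\<dots> = Phi smul T v v' w"
    by (simp add: sum.distrib Phi_def opoly_bound[OF cvs N1] opoly_bound[OF cvs N2])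
  finally show ?thesis by simp
qed

lemma Phi_inj:
  assumes cvs: "cvs smul" and basis: "is_basis smul (\<lambda>(k::nat, e::bool). (T ^^ k) (if e then v' else v))"
  and z: "Phi smul T v v' w = 0"
  shows "w = 0"
proof -
  define N where "N = max (degree (fst w)) (degree (snd w))"
  have fin: "finite {i. cw w i \<noteq> 0}"
  proof (rule finite_subset)
    show "{i. cw w i \<noteq> 0} \<subseteq> {..N} \<times> UNIV"
      by (auto simp: cw_def N_def coeff_eq_0 split: if_splits) (metis coeff_eq_0 le_max_iff_disj not_le)+
  qed simp
  have "(\<Sum>i\<in>{i. cw w i \<noteq> 0}. smul (cw w i) ((\<lambda>(k, e). (T ^^ k) (if e then v' else v)) i))
      = (\<Sum>i\<in>{..N} \<times> UNIV. smul (cw w i) ((\<lambda>(k, e). (T ^^ k) (if e then v' else v)) i))"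
  proof (rule sum.mono_neutral_left)
    show "finite ({..N} \<times> (UNIV :: bool set))" by simp
    show "{i. cw w i \<noteq> 0} \<subseteq> {..N} \<times> UNIV"
      by (auto simp: cw_def N_def split: if_splits) (metis coeff_eq_0 le_max_iff_disj not_le)+
    show "\<forall>i\<in>{..N} \<times> UNIV - {i. cw w i \<noteq> 0}. smul (cw w i) ((\<lambda>(k, e). (T ^^ k) (if e then v' else v)) i) = 0"
      by (auto simp: cvs_zero_left[OF cvs])
  qed
  also have "\<dots> = Phi smul T v v' w"
    by (rule Phi_as_sum[symmetric, OF cvs]) (simp_all add: N_def)
  finally have "(\<Sum>i\<in>{i. cw w i \<noteq> 0}. smul (cw w i) ((\<lambda>(k, e). (T ^^ k) (if e then v' else v)) i)) = 0"
    using z by simp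
  then have h: "\<forall>i. cw w i = 0" using basis fin unfolding is_basis_def by blast
  have "coeff (fst w) k = 0 \<and> coeff (snd w) k = 0" for k
    using h[rule_format, of "(k, False)"] h[rule_format, of "(k, True)"] by (simp add: cw_def)
  then show "w = 0" by (simp add: prod_eq_iff poly_eq_iff)
qed

lemma Phi_surj:
  assumes cvs: "cvs smul" and basis: "is_basis smul (\<lambda>(k::nat, e::bool). (T ^^ k) (if e then v' else v))"
  shows "\<exists>w. Phi smul T v v' w = x"
proof -
  obtain c where fin: "finite {i. c i \<noteq> 0}"
    and x: "x = (\<Sum>i\<in>{i. c i \<noteq> 0}. smul (c i) ((\<lambda>(k, e). (T ^^ k) (if e then v' else v)) i))"
    using basis unfolding is_basis_def by blast
  define N where "N = Max (insert 0 (fst ` {i. c i \<noteq> 0}))"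
  have bound: "c (k, b) = 0" if "k > N" for k b
  proof (rule ccontr)
    assume "c (k, b) \<noteq> 0"
    then have "k \<in> fst ` {i. c i \<noteq> 0}" by force
    then have "k \<le> N" unfolding N_def using fin by (intro Max_ge) auto
    then show False using that by simp
  qed
  define f where "f = Abs_poly (\<lambda>k. c (k, False))"
  define g where "g = Abs_poly (\<lambda>k. c (k, True))"
  have cf: "coeff f = (\<lambda>k. c (k, False))" unfolding f_def by (rule coeff_Abs_poly) (rule bound)
  have cg: "coeff g = (\<lambda>k. c (k, True))" unfolding g_def by (rule coeff_Abs_poly) (rule bound)
  have df: "degree f \<le> N" by (rule degree_le) (simp add: cf bound)
  have dg: "degree g \<le> N" by (rule degree_le) (simp add: cg bound)
  have cwc: "cw (f, g) = c" by (auto simp: cw_def cf cg fun_eq_iff)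
  have "Phi smul T v v' (f, g) = (\<Sum>i\<in>{..N} \<times> UNIV. smul (c i) ((\<lambda>(k, e). (T ^^ k) (if e then v' else v)) i))"
    using Phi_as_sum[OF cvs, of "(f, g)" N T v v'] df dg cwc by simp
  also have "\<dots> = x" unfolding x
  proof (rule sum.mono_neutral_right)
    show "finite ({..N} \<times> (UNIV :: bool set))" by simp
    show "{i. c i \<noteq> 0} \<subseteq> {..N} \<times> UNIV" using bound by (auto simp: not_le[symmetric])
    show "\<forall>i\<in>{..N} \<times> UNIV - {i. c i \<noteq> 0}. smul (c i) ((\<lambda>(k, e). (T ^^ k) (if e then v' else v)) i) = 0"
      by (auto simp: cvs_zero_left[OF cvs])
  qed
  finally show ?thesis by blast
qed

lemma Phi_add: "cvs smul \<Longrightarrow> Phi smul T v v' (w1 + w2) = Phi smul T v v' w1 + Phi smul T v v' w2"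
  by (simp add: Phi_def opoly_add algebra_simps)
lemma Phi_smul: "cvs smul \<Longrightarrow> Phi smul T v v' (Omega_smul c w) = smul c (Phi smul T v v' w)"
  by (simp add: Phi_def Omega_smul_def opoly_smult cvs_add_right)
lemma Phi_diff: "cvs smul \<Longrightarrow> Phi smul T v v' (w1 - w2) = Phi smul T v v' w1 - Phi smul T v v' w2"
  by (simp add: Phi_def opoly_diff algebra_simps)

lemma subspace_diff:
  assumes cvs: "cvs smul" and sub: "subspace_of smul W" and x: "x \<in> W" and y: "y \<in> W"
  shows "x - y \<in> W"
proof -
  have "smul (-1) y \<in> W" using sub y by (simp add: subspace_of_def)
  then have "x + smul (-1) y \<in> W" using sub x by (simp add: subspace_of_def)
  then show ?thesis using cvs_neg_left[OF cvs, of 1 y] cvs_one[OF cvs] by simp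
qed

lemma part4:
  fixes smul :: "complex \<Rightarrow> 'v::ab_group_add \<Rightarrow> 'v" and q :: complex
  assumes q: "q \<noteq> 0" and RM: "R_module q smul V0 V1 act" and U: "U_eta_free_rank1 smul V0 act"
  shows "\<exists>l a0 b0. l \<noteq> 0 \<and> (q \<noteq> -1 \<longrightarrow> b0 = 0) \<and>
             R_isomorphic smul V0 V1 act Omega_smul Omega_even Omega_odd (Omega_act q l a0 b0)"
proof -
  note RM' = RM[unfolded R_module_def]
  have SV: "super_vs smul V0 V1" using RM' by (elim conjE) auto
  have lin: "clinear_map smul smul (act x)" for x using RM' by (elim conjE) auto
  have parL: "act (L m i) ` V0 \<subseteq> V0 \<and> act (L m i) ` V1 \<subseteq> V1" for m i using RM' by (elim conjE) auto
  have parG: "act (G m i) ` V0 \<subseteq> V1 \<and> act (G m i) ` V1 \<subseteq> V0" for m i using RM' by (elim conjE) auto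
  have RLL: "act (L m i) (act (L n j) y) - act (L n j) (act (L m i) y)
                    = smul (cLL q m i n j) (act (L (m + n) (i + j)) y)" for m i n j y using RM' by (elim conjE) auto
  have RLG: "act (L m i) (act (G l j) y) - act (G l j) (act (L m i) y)
                    = smul (cLG q m i l j) (act (G (m + l) (i + j)) y)" for m i l j y using RM' by (elim conjE) auto
  have RGG: "act (G l i) (act (G r j) y) + act (G r j) (act (G l i) y)
                    = smul (2 * q) (act (L (l + r) (i + j)) y)" for l i r j y using RM' by (elim conjE) auto
  have cvs: "cvs smul" and sub0: "subspace_of smul V0" and sub1: "subspace_of smul V1"
    and int01: "V0 \<inter> V1 = {0}"
    using SV unfolding super_vs_def by blast+
  obtain v where v0: "v \<in> V0"
    and basis: "is_basis smul (\<lambda>(k::nat, e::bool). (act (L 0 0) ^^ k) (if e then act (G 0 0) v else v))"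
    using U unfolding U_eta_free_rank1_def by blast
  define T where "T = act (L 0 0)"
  define v' where "v' = act (G 0 0) v"
  define \<Phi> where "\<Phi> = Phi smul T v v'"
  have basis': "is_basis smul (\<lambda>(k::nat, e::bool). (T ^^ k) (if e then v' else v))"
    unfolding T_def v'_def by (rule basis)
  have linT: "clinear_map smul smul T" using lin T_def by simp
  have v1: "v' \<in> V1" using parG v0 v'_def by blast
  have TV0: "x \<in> V0 \<Longrightarrow> T x \<in> V0" for x using parL T_def by blast
  have TV1: "x \<in> V1 \<Longrightarrow> T x \<in> V1" for x using parL T_def by blast
  have inj: "inj \<Phi>"
  proof (rule injI)
    fix w1 w2 assume "\<Phi> w1 = \<Phi> w2"
    then have "Phi smul T v v' (w1 - w2) = 0" by (simp add: \<Phi>_def Phi_diff[OF cvs])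
    then have "w1 - w2 = 0" by (rule Phi_inj[OF cvs basis'])
    then show "w1 = w2" by simp
  qed
  have surj: "surj \<Phi>" using Phi_surj[OF cvs basis'] unfolding \<Phi>_def by (metis surjI)
  have bij: "bij \<Phi>" using inj surj by (simp add: bij_def)
  define \<psi> where "\<psi> = inv \<Phi>"
  have \<psi>\<Phi>: "\<psi> (\<Phi> w) = w" for w using inj \<psi>_def by simp
  have \<Phi>\<psi>: "\<Phi> (\<psi> x) = x" for x using surj \<psi>_def by (simp add: surj_f_inv_f)
  have Phi_even: "\<Phi> (f, 0) = opoly smul T f v" for f by (simp add: \<Phi>_def Phi_def opoly_zero'[OF cvs])
  have Phi_odd: "\<Phi> (0, g) = opoly smul T g v'" for g by (simp add: \<Phi>_def Phi_def opoly_zero'[OF cvs])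
  have Phi_split: "\<Phi> (f, g) = \<Phi> (f, 0) + \<Phi> (0, g)" for f g by (simp add: \<Phi>_def Phi_def opoly_zero'[OF cvs])
  have Phi0: "\<Phi> 0 = 0" by (simp add: \<Phi>_def Phi_def opoly_zero'[OF cvs])
  have in0: "\<Phi> (f, 0) \<in> V0" for f using Phi_even opoly_in[OF cvs sub0 v0 TV0] by simp
  have in1: "\<Phi> (0, g) \<in> V1" for g using Phi_odd opoly_in[OF cvs sub1 v1 TV1] by simp
  have \<psi>0: "snd (\<psi> x) = 0" if "x \<in> V0" for x
  proof -
    obtain f g where fg: "\<psi> x = (f, g)" by (cases "\<psi> x")
    have x: "x = \<Phi> (f, 0) + \<Phi> (0, g)" using \<Phi>\<psi>[of x] fg Phi_split[of f g] by simp
    have "\<Phi> (0, g) = x - \<Phi> (f, 0)" using x by simp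
    then have "\<Phi> (0, g) \<in> V0" using subspace_diff[OF cvs sub0 that in0] by simp
    then have "\<Phi> (0, g) = 0" using in1 int01 by blast
    then have "\<Phi> (0, g) = \<Phi> 0" using Phi0 by simp
    then have "(0, g) = (0 :: omega)" using inj by (simp add: inj_eq)
    then show ?thesis using fg by (simp add: zero_prod_def)
  qed
  have \<psi>1: "fst (\<psi> x) = 0" if "x \<in> V1" for x
  proof -
    obtain f g where fg: "\<psi> x = (f, g)" by (cases "\<psi> x")
    have x: "x = \<Phi> (f, 0) + \<Phi> (0, g)" using \<Phi>\<psi>[of x] fg Phi_split[of f g] by simp
    have "\<Phi> (f, 0) = x - \<Phi> (0, g)" using x by simp
    then have "\<Phi> (f, 0) \<in> V1" using subspace_diff[OF cvs sub1 that in1] by simp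
    then have "\<Phi> (f, 0) = 0" using in0 int01 by blast
    then have "\<Phi> (f, 0) = \<Phi> 0" using Phi0 by simp
    then have "(f, 0) = (0 :: omega)" using inj by (simp add: inj_eq)
    then show ?thesis using fg by (simp add: zero_prod_def)
  qed
  have rep0: "x = opoly smul T (fst (\<psi> x)) v" if "x \<in> V0" for x
  proof -
    have "\<psi> x = (fst (\<psi> x), 0)" using \<psi>0[OF that] by (simp add: prod_eq_iff)
    then have "x = \<Phi> (fst (\<psi> x), 0)" using \<Phi>\<psi>[of x] by metis
    then show ?thesis using Phi_even by simp
  qed
  have rep1: "x = opoly smul T (snd (\<psi> x)) v'" if "x \<in> V1" for x
  proof -
    have "\<psi> x = (0, snd (\<psi> x))" using \<psi>1[OF that] by (simp add: prod_eq_iff)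
    then have "x = \<Phi> (0, snd (\<psi> x))" using \<Phi>\<psi>[of x] by metis
    then show ?thesis using Phi_odd by simp
  qed
  define P where "P m i = fst (\<psi> (act (L m i) v))" for m i
  define Q where "Q m i = snd (\<psi> (act (L m i) v'))" for m i
  define A where "A m i = snd (\<psi> (act (G m i) v))" for m i
  define B where "B m i = fst (\<psi> (act (G m i) v'))" for m i
  have Lv: "act (L m i) v = opoly smul T (P m i) v" for m i
  proof -
    have "act (L m i) v \<in> V0" using parL[of m i] v0 by blast
    then show ?thesis unfolding P_def by (rule rep0)
  qed
  have Lv': "act (L m i) v' = opoly smul T (Q m i) v'" for m i
  proof -
    have "act (L m i) v' \<in> V1" using parL[of m i] v1 by blast
    then show ?thesis unfolding Q_def by (rule rep1)
  qed
  have Gv: "act (G m i) v = opoly smul T (A m i) v'" for m i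
  proof -
    have "act (G m i) v \<in> V1" using parG[of m i] v0 by blast
    then show ?thesis unfolding A_def by (rule rep1)
  qed
  have Gv': "act (G m i) v' = opoly smul T (B m i) v" for m i
  proof -
    have "act (G m i) v' \<in> V0" using parG[of m i] v1 by blast
    then show ?thesis unfolding B_def by (rule rep0)
  qed
  have commL: "act (L m i) (T y) = T (act (L m i) y) - smul (of_int m * q) (act (L m i) y)" for m i y
  proof -
    have "act (L m i) (T y) - T (act (L m i) y) = smul (cLL q m i 0 0) (act (L m i) y)"
      using RLL[of m i 0 0 y] by (simp add: T_def)
    also have "cLL q m i 0 0 = - (of_int m * q)" by (simp add: cLL_def)
    finally show ?thesis using cvs_neg_left[OF cvs] by (simp add: algebra_simps)
  qed
  have commG: "act (G m i) (T y) = T (act (G m i) y) - smul (of_int m * q) (act (G m i) y)" for m i y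
  proof -
    have "T (act (G m i) y) - act (G m i) (T y) = smul (cLG q 0 0 m i) (act (G m i) y)"
      using RLG[of 0 0 m i y] by (simp add: T_def)
    also have "cLG q 0 0 m i = of_int m * q" by (simp add: cLG_def)
    finally show ?thesis by (simp add: algebra_simps)
  qed
  have opL: "act (L m i) (opoly smul T f w) = opoly smul T (shift (of_int m * q) f) (act (L m i) w)" for m i f w
    by (rule opoly_comm[OF cvs linT lin[of "L m i"] commL[of m i]])
  have opG: "act (G m i) (opoly smul T f w) = opoly smul T (shift (of_int m * q) f) (act (G m i) w)" for m i f w
    by (rule opoly_comm[OF cvs linT lin[of "G m i"] commG[of m i]])
  have inter: "act x (\<Phi> w) = \<Phi> (oact q P Q A B x w)" for x w
  proof (cases x)
    case (L m i)
    have "act x (\<Phi> w) = act (L m i) (opoly smul T (fst w) v) + act (L m i) (opoly smul T (snd w) v')"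
      by (simp add: L \<Phi>_def Phi_def lin_add[OF lin])
    also have "\<dots> = \<Phi> (oact q P Q A B x w)"
      by (simp add: L opL Lv Lv' opoly_mult[OF cvs linT, symmetric] \<Phi>_def Phi_def mult.commute)
    finally show ?thesis .
  next
    case (G m i)
    have "act x (\<Phi> w) = act (G m i) (opoly smul T (fst w) v) + act (G m i) (opoly smul T (snd w) v')"
      by (simp add: G \<Phi>_def Phi_def lin_add[OF lin])
    also have "\<dots> = \<Phi> (oact q P Q A B x w)"
      by (simp add: G opG Gv Gv' opoly_mult[OF cvs linT, symmetric] \<Phi>_def Phi_def mult.commute add.commute)
    finally show ?thesis .
  qed
  have ev_inj: "p = r" if "opoly smul T p v = opoly smul T r v" for p r
  proof -
    have "\<Phi> (p, 0) = \<Phi> (r, 0)" using that Phi_even by simp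
    then show ?thesis using inj by (simp add: inj_eq)
  qed
  have od_inj: "p = r" if "opoly smul T p v' = opoly smul T r v'" for p r
  proof -
    have "\<Phi> (0, p) = \<Phi> (0, r)" using that Phi_odd by simp
    then show ?thesis using inj by (simp add: inj_eq)
  qed
  have opx: "opoly smul T [:0, 1:] w = T w" for w
    by (simp add: opoly_pCons[OF cvs linT] opoly_const cvs_zero_left[OF cvs] cvs_one[OF cvs])
  have P00: "P 0 0 = [:0, 1:]"
  proof (rule ev_inj)
    have "opoly smul T (P 0 0) v = act (L 0 0) v" by (rule Lv[symmetric])
    also have "\<dots> = T v" by (simp add: T_def)
    also have "\<dots> = opoly smul T [:0, 1:] v" by (rule opx[symmetric])
    finally show "opoly smul T (P 0 0) v = opoly smul T [:0, 1:] v" .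
  qed
  have Q00: "Q 0 0 = [:0, 1:]"
  proof (rule od_inj)
    have "opoly smul T (Q 0 0) v' = act (L 0 0) v'" by (rule Lv'[symmetric])
    also have "\<dots> = T v'" by (simp add: T_def)
    also have "\<dots> = opoly smul T [:0, 1:] v'" by (rule opx[symmetric])
    finally show "opoly smul T (Q 0 0) v' = opoly smul T [:0, 1:] v'" .
  qed
  have A00: "A 0 0 = 1"
  proof (rule od_inj)
    have "opoly smul T (A 0 0) v' = act (G 0 0) v" by (rule Gv[symmetric])
    also have "\<dots> = v'" by (simp add: v'_def)
    also have "\<dots> = opoly smul T 1 v'" by (simp add: one_pCons opoly_const cvs_one[OF cvs])
    finally show "opoly smul T (A 0 0) v' = opoly smul T 1 v'" .
  qed
  have GGv: "act (G 0 0) v' = smul q (T v)"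
  proof -
    have "act (G 0 0) v' + act (G 0 0) v' = smul (2 * q) (T v)"
      using RGG[of 0 0 0 0 v] by (simp add: T_def v'_def)
    moreover have "act (G 0 0) v' + act (G 0 0) v' = smul 2 (act (G 0 0) v')"
      using cvs_add_left[OF cvs, of 1 1] cvs_one[OF cvs] by simp
    ultimately have "smul 2 (act (G 0 0) v') = smul (2 * q) (T v)" by simp
    then have "smul (1/2) (smul 2 (act (G 0 0) v')) = smul (1/2) (smul (2 * q) (T v))" by simp
    then show ?thesis by (simp add: cvs_assoc[OF cvs] cvs_one[OF cvs])
  qed
  have B00: "B 0 0 = [:0, q:]"
  proof (rule ev_inj)
    have "opoly smul T [:0, q:] v = smul q (T v)"
      by (simp add: opoly_pCons[OF cvs linT] opoly_const cvs_zero_left[OF cvs] lin_smul[OF linT])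
    then show "opoly smul T (B 0 0) v = opoly smul T [:0, q:] v" using Gv'[of 0 0] GGv by simp
  qed
  have Phi_d: "\<Phi> (w1 - w2) = \<Phi> w1 - \<Phi> w2" for w1 w2 by (simp add: \<Phi>_def Phi_diff[OF cvs])
  have Phi_a: "\<Phi> (w1 + w2) = \<Phi> w1 + \<Phi> w2" for w1 w2 by (simp add: \<Phi>_def Phi_add[OF cvs])
  have Phi_s: "\<Phi> (Omega_smul c w) = smul c (\<Phi> w)" for c w by (simp add: \<Phi>_def Phi_smul[OF cvs])
  let ?o = "oact q P Q A B"
  have pLL: "?o (L m i) (?o (L n j) w) - ?o (L n j) (?o (L m i) w) = Omega_smul (cLL q m i n j) (?o (L (m + n) (i + j)) w)" for m i n j w
  proof -
    have "\<Phi> (?o (L m i) (?o (L n j) w) - ?o (L n j) (?o (L m i) w)) = \<Phi> (Omega_smul (cLL q m i n j) (?o (L (m + n) (i + j)) w))"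
      using RLL[of m i n j "\<Phi> w"] by (simp only: inter Phi_d Phi_s)
    then show ?thesis using inj by (simp add: inj_eq)
  qed
  have pLG: "?o (L m i) (?o (G n j) w) - ?o (G n j) (?o (L m i) w) = Omega_smul (cLG q m i n j) (?o (G (m + n) (i + j)) w)" for m i n j w
  proof -
    have "\<Phi> (?o (L m i) (?o (G n j) w) - ?o (G n j) (?o (L m i) w)) = \<Phi> (Omega_smul (cLG q m i n j) (?o (G (m + n) (i + j)) w))"
      using RLG[of m i n j "\<Phi> w"] by (simp only: inter Phi_d Phi_s)
    then show ?thesis using inj by (simp add: inj_eq)
  qed
  have pGG: "?o (G m i) (?o (G n j) w) + ?o (G n j) (?o (G m i) w) = Omega_smul (2 * q) (?o (L (m + n) (i + j)) w)" for m i n j w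
  proof -
    have "\<Phi> (?o (G m i) (?o (G n j) w) + ?o (G n j) (?o (G m i) w)) = \<Phi> (Omega_smul (2 * q) (?o (L (m + n) (i + j)) w))"
      using RGG[of m i n j "\<Phi> w"] by (simp only: inter Phi_a Phi_s)
    then show ?thesis using inj by (simp add: inj_eq)
  qed
  have LLe: "P m i * shift (of_int m * q) (P n j) - P n j * shift (of_int n * q) (P m i)
                = smult (cLL q m i n j) (P (m + n) (i + j))" for m i n j
    using arg_cong[OF pLL[of m i n j "(1, 0)"], of fst] by (simp add: Omega_smul_def)
  have LLo: "Q m i * shift (of_int m * q) (Q n j) - Q n j * shift (of_int n * q) (Q m i)
                = smult (cLL q m i n j) (Q (m + n) (i + j))" for m i n j
    using arg_cong[OF pLL[of m i n j "(0, 1)"], of snd] by (simp add: Omega_smul_def)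
  have LGf: "Q m i * shift (of_int m * q) (A n j) - A n j * shift (of_int n * q) (P m i)
                = smult (cLG q m i n j) (A (m + n) (i + j))" for m i n j
    using arg_cong[OF pLG[of m i n j "(1, 0)"], of snd] by (simp add: Omega_smul_def)
  have LGt: "P m i * shift (of_int m * q) (B n j) - B n j * shift (of_int n * q) (Q m i)
                = smult (cLG q m i n j) (B (m + n) (i + j))" for m i n j
    using arg_cong[OF pLG[of m i n j "(0, 1)"], of fst] by (simp add: Omega_smul_def)
  have GGf: "B m i * shift (of_int m * q) (A n j) + B n j * shift (of_int n * q) (A m i)
                = smult (2 * q) (P (m + n) (i + j))" for m i n j
    using arg_cong[OF pGG[of m i n j "(1, 0)"], of fst] by (simp add: Omega_smul_def)
  have GGt: "A m i * shift (of_int m * q) (B n j) + A n j * shift (of_int n * q) (B m i)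
                = smult (2 * q) (Q (m + n) (i + j))" for m i n j
    using arg_cong[OF pGG[of m i n j "(0, 1)"], of snd] by (simp add: Omega_smul_def)
  obtain l a b where l0: "l \<noteq> 0" and qb: "q \<noteq> -1 \<longrightarrow> b = 0"
    and forms: "\<And>m i. P m i = OmP q l a b m i \<and> Q m i = OmQ q l a b m i \<and> A m i = OmA q l a b m i \<and> B m i = OmB q l a b m i"
    using classify[OF q LLe LLo LGf LGt GGf P00 Q00 A00 B00] by blast
  have oeq: "oact q P Q A B = Omega_act q l a b"
  proof -
    have "P = OmP q l a b" "Q = OmQ q l a b" "A = OmA q l a b" "B = OmB q l a b"
      using forms by (auto simp: fun_eq_iff)
    then show ?thesis by (simp add: Omega_act_oact)
  qed
  have inter': "act x (\<Phi> w) = \<Phi> (Omega_act q l a b x w)" for x w using inter oeq by simp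
  have iso: "R_iso smul V0 V1 act Omega_smul Omega_even Omega_odd (Omega_act q l a b) \<psi>"
    unfolding R_iso_def
  proof (intro conjI allI)
    show "bij \<psi>" unfolding \<psi>_def by (rule bij_imp_bij_inv[OF bij])
    show "clinear_map smul Omega_smul \<psi>"
      unfolding clinear_map_def
    proof (intro conjI allI)
      fix x y
      have "\<Phi> (\<psi> x + \<psi> y) = x + y" by (simp add: Phi_a \<Phi>\<psi>)
      then show "\<psi> (x + y) = \<psi> x + \<psi> y" by (metis \<psi>\<Phi>)
    next
      fix c x
      have "\<Phi> (Omega_smul c (\<psi> x)) = smul c x" by (simp add: Phi_s \<Phi>\<psi>)
      then show "\<psi> (smul c x) = Omega_smul c (\<psi> x)" by (metis \<psi>\<Phi>)
    qed
    show "\<psi> ` V0 \<subseteq> Omega_even" using \<psi>0 by (auto simp: Omega_even_def)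
    show "\<psi> ` V1 \<subseteq> Omega_odd" using \<psi>1 by (auto simp: Omega_odd_def)
    fix x y
    have "act x y = \<Phi> (Omega_act q l a b x (\<psi> y))" using inter'[of x "\<psi> y"] by (simp add: \<Phi>\<psi>)
    then show "\<psi> (act x y) = Omega_act q l a b x (\<psi> y)" by (simp add: \<psi>\<Phi>)
  qed
  show ?thesis using l0 qb iso unfolding R_isomorphic_def by blast
qed

lemma OmP00[simp]: "OmP q l a b 0 0 = [:0, 1:]" by (simp add: OmP_def kd_def)
lemma OmQ00[simp]: "OmQ q l a b 0 0 = [:0, 1:]" by (simp add: OmQ_def kd_def)
lemma OmA00[simp]: "OmA q l a b 0 0 = 1" by (simp add: OmA_def kd_def one_pCons)
lemma OmB00[simp]: "OmB q l a b 0 0 = [:0, q:]" by (simp add: OmB_def kd_def)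

lemma part3:
  fixes q lam mu a a' b b' :: complex
  assumes q: "q \<noteq> 0" and l0: "lam \<noteq> 0" and m0: "mu \<noteq> 0"
    and qb: "q \<noteq> -1 \<longrightarrow> b = 0 \<and> b' = 0"
  shows "R_isomorphic Omega_smul Omega_even Omega_odd (Omega_act q lam a b)
                     Omega_smul Omega_even Omega_odd (Omega_act q mu a' b')
          \<longleftrightarrow> lam = mu \<and> a = a' \<and> b = b'"
proof
  assume "lam = mu \<and> a = a' \<and> b = b'"
  then show "R_isomorphic Omega_smul Omega_even Omega_odd (Omega_act q lam a b)
                     Omega_smul Omega_even Omega_odd (Omega_act q mu a' b')"
    unfolding R_isomorphic_def R_iso_def
    by (intro exI[of _ id]) (auto simp: clinear_map_def)
next
  assume "R_isomorphic Omega_smul Omega_even Omega_odd (Omega_act q lam a b)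
                     Omega_smul Omega_even Omega_odd (Omega_act q mu a' b')"
  then obtain \<phi> where bij: "bij \<phi>" and lin: "clinear_map Omega_smul Omega_smul \<phi>"
    and par0: "\<phi> ` Omega_even \<subseteq> Omega_even"
    and int: "\<And>x w. \<phi> (Omega_act q lam a b x w) = Omega_act q mu a' b' x (\<phi> w)"
    unfolding R_isomorphic_def R_iso_def by blast
  define c where "c = fst (\<phi> (1, 0))"
  have \<phi>1: "\<phi> (1, 0) = (c, 0)"
  proof -
    have "(1, 0) \<in> Omega_even" by (simp add: Omega_even_def)
    then have "\<phi> (1, 0) \<in> Omega_even" using par0 by blast
    then have "snd (\<phi> (1, 0)) = 0" by (simp add: Omega_even_def)
    then show ?thesis by (simp add: c_def prod_eq_iff)
  qed
  have ev: "\<phi> (p, 0) = (p * c, 0)" for p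
  proof (induction p)
    case 0
    have "\<phi> 0 = 0" using lin_zero[OF lin] .
    then show ?case by (simp add: zero_prod_def)
  next
    case (pCons x p)
    have "(pCons x p, 0) = Omega_smul x (1, 0) + Omega_act q lam a b (L 0 0) (p, 0)"
      by (simp add: Omega_act_oact Omega_smul_def)
    then have "\<phi> (pCons x p, 0) = Omega_smul x (\<phi> (1, 0)) + Omega_act q mu a' b' (L 0 0) (\<phi> (p, 0))"
      by (simp add: lin_add[OF lin] lin_smul[OF lin] int)
    also have "\<dots> = (pCons x p * c, 0)"
      using pCons.IH \<phi>1 by (simp add: Omega_act_oact Omega_smul_def mult_pCons_left)
    finally show ?case .
  qed
  have od: "\<phi> (0, g) = (0, g * c)" for g
  proof -
    have "(0, g) = Omega_act q lam a b (G 0 0) (g, 0)" by (simp add: Omega_act_oact)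
    then have "\<phi> (0, g) = Omega_act q mu a' b' (G 0 0) (\<phi> (g, 0))" by (simp add: int)
    also have "\<dots> = (0, g * c)" by (simp add: ev Omega_act_oact)
    finally show ?thesis .
  qed
  have full: "\<phi> (f, g) = (f * c, g * c)" for f g
  proof -
    have "(f, g) = (f, 0) + (0, g)" by simp
    then have "\<phi> (f, g) = \<phi> (f, 0) + \<phi> (0, g)" by (metis lin_add[OF lin])
    then show ?thesis by (simp add: ev od)
  qed
  have "surj \<phi>" using bij by (simp add: bij_def)
  then obtain w where "(1, 0) = \<phi> w" by (rule surjE)
  then have fc: "fst w * c = 1" using full[of "fst w" "snd w"] by simp
  have c0: "c \<noteq> 0" using fc by auto
  have w0: "fst w \<noteq> 0" using fc by auto
  have "degree (fst w * c) = degree (fst w) + degree c" using c0 w0 by (simp add: degree_mult_eq)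
  then have dc: "degree c = 0" using fc by simp
  have cancel: "p = r" if "p * c = r * c" for p r using that c0 by simp
  have Leq: "OmP q lam a b m i = OmP q mu a' b' m i" for m i
  proof (rule cancel)
    have "\<phi> (Omega_act q lam a b (L m i) (1, 0)) = Omega_act q mu a' b' (L m i) (c, 0)"
      using int \<phi>1 by simp
    moreover have "shift (of_int m * q) c = c" using dc by (metis degree_eq_zeroE shift_const)
    ultimately show "OmP q lam a b m i * c = OmP q mu a' b' m i * c"
      by (simp add: Omega_act_oact ev)
  qed
  have e1: "coeff (OmP q lam a b 1 0) 1 = coeff (OmP q mu a' b' 1 0) 1" using Leq by simp
  then have lm: "lam = mu" by (simp add: OmP_def kd_def)
  have e0: "coeff (OmP q lam a b 1 0) 0 = coeff (OmP q mu a' b' 1 0) 0" using Leq by simp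
  then have "lam * (q * a) = mu * (q * a')" by (simp add: OmP_def kd_def)
  then have aa: "a = a'" using lm l0 q by simp
  have "coeff (OmP q lam a b 0 1) 0 = coeff (OmP q mu a' b' 0 1) 0" using Leq by simp
  then have "kd (q = -1) * b = kd (q = -1) * b'" by (simp add: OmP_def kd_def)
  then have bb: "b = b'" using qb by (cases "q = -1") (auto simp: kd_def)
  show "lam = mu \<and> a = a' \<and> b = b'" using lm aa bb by simp
qed

lemma root_exists: "degree (p :: complex poly) \<noteq> 0 \<Longrightarrow> \<exists>r. poly p r = 0"
  using fundamental_theorem_of_algebra[of p] constant_degree[of p] by simp

lemma vanish_lemma:
  fixes f c :: "complex poly"
  assumes q: "q \<noteq> 0" and c: "c \<noteq> 0"
  and h: "\<And>n::nat. poly c (of_nat n) * poly f (r - of_nat n * q) = 0"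
  shows "f = 0"
proof -
  have "c * pcompose f [:r, - q:] = 0"
  proof (rule poly_zero_inj[of "\<lambda>n. of_nat n"])
    show "inj (\<lambda>n::nat. of_nat n :: complex)" by (simp add: inj_def)
    show "poly (c * pcompose f [:r, - q:]) (of_nat n) = 0" for n
      using h[of n] by (simp add: poly_pcompose algebra_simps)
  qed
  then have z: "pcompose f [:r, - q:] = 0" using c by simp
  have "poly f x = 0" for x
  proof -
    have "poly (pcompose f [:r, - q:]) ((r - x) / q) = 0" using z by simp
    then show ?thesis using q by (simp add: poly_pcompose field_simps)
  qed
  then show ?thesis by (simp add: poly_ext_iff)
qed

lemma part2:
  fixes q lam a b :: complex
  assumes q: "q \<noteq> 0" and l0: "lam \<noteq> 0" and qb: "q \<noteq> -1 \<longrightarrow> b = 0"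
  shows "R_simple q Omega_smul Omega_even Omega_odd (Omega_act q lam a b) \<longleftrightarrow> a \<noteq> 0 \<or> b \<noteq> 0"
proof
  assume simp: "R_simple q Omega_smul Omega_even Omega_odd (Omega_act q lam a b)"
  show "a \<noteq> 0 \<or> b \<noteq> 0"
  proof (rule ccontr)
    assume "\<not> (a \<noteq> 0 \<or> b \<noteq> 0)"
    then have a0: "a = 0" and b0: "b = 0" by auto
    define W where "W = {w :: omega. poly (fst w) 0 = 0}"
    have sub: "R_submodule Omega_smul Omega_even Omega_odd (Omega_act q lam a b) W"
      unfolding R_submodule_def
    proof (intro conjI ballI allI)
      show "subspace_of Omega_smul W" by (simp add: subspace_of_def W_def Omega_smul_def)
    next
      fix x w assume "w \<in> W"
      show "Omega_act q lam a b x w \<in> W"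
        using a0 b0 by (cases x) (simp_all add: W_def Omega_act_oact OmP_def OmB_def kd_def)
    next
      fix w assume w: "w \<in> W"
      show "\<exists>w0\<in>W \<inter> Omega_even. \<exists>w1\<in>W \<inter> Omega_odd. w = w0 + w1"
        using w by (intro bexI[of _ "(fst w, 0)"] bexI[of _ "(0, snd w)"])
                   (auto simp: W_def Omega_even_def Omega_odd_def prod_eq_iff)
    qed
    have "W = {0} \<or> W = UNIV" using simp sub unfolding R_simple_def by blast
    moreover have "(0, 1) \<in> W" by (simp add: W_def)
    moreover have "(1, 0) \<notin> W" by (simp add: W_def)
    ultimately show False by (auto simp: zero_prod_def)
  qed
next
  assume ab: "a \<noteq> 0 \<or> b \<noteq> 0"
  let ?act = "Omega_act q lam a b"
  show "R_simple q Omega_smul Omega_even Omega_odd ?act"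
    unfolding R_simple_def
  proof (intro conjI allI impI)
    show "R_module q Omega_smul Omega_even Omega_odd ?act" by (rule part1[OF l0 qb])
    show "\<exists>v :: omega. v \<noteq> 0" by (rule exI[of _ "(1, 0)"]) (simp add: zero_prod_def)
    fix W assume sub: "R_submodule Omega_smul Omega_even Omega_odd ?act W"
    have subsp: "subspace_of Omega_smul W" and clo: "\<And>x w. w \<in> W \<Longrightarrow> ?act x w \<in> W"
      and grad: "\<And>w. w \<in> W \<Longrightarrow> \<exists>w0\<in>W \<inter> Omega_even. \<exists>w1\<in>W \<inter> Omega_odd. w = w0 + w1"
      using sub unfolding R_submodule_def by blast+
    have W0: "0 \<in> W" and Wadd: "\<And>x y. x \<in> W \<Longrightarrow> y \<in> W \<Longrightarrow> x + y \<in> W"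
      and Wsm: "\<And>c x. x \<in> W \<Longrightarrow> Omega_smul c x \<in> W"
      using subsp unfolding subspace_of_def by blast+
    have Iadd: "(f + g, 0) \<in> W" if "(f, 0) \<in> W" "(g, 0) \<in> W" for f g
      using Wadd[OF that] by simp
    have Ism: "(smult c f, 0) \<in> W" if "(f, 0) \<in> W" for c f
      using Wsm[OF that, of c] by (simp add: Omega_smul_def)
    have Ix: "([:0, 1:] * f, 0) \<in> W" if "(f, 0) \<in> W" for f
      using clo[OF that, of "L 0 0"] by (simp add: Omega_act_oact)
    have Imult: "(r * f, 0) \<in> W" if "(f, 0) \<in> W" for r f
    proof (induction r)
      case 0 then show ?case using W0 by (simp add: zero_prod_def)
    next
      case (pCons x r)
      have "pCons x r * f = smult x f + [:0, 1:] * (r * f)" by (simp add: mult_pCons_left)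
      then show ?case using Iadd[OF Ism[OF that] Ix[OF pCons.IH]] by simp
    qed
    have Idiff: "(f - g, 0) \<in> W" if "(f, 0) \<in> W" "(g, 0) \<in> W" for f g
      using Iadd[OF that(1) Ism[OF that(2), of "-1"]] by simp
    have Iodd: "(0, f) \<in> W" if "(f, 0) \<in> W" for f
      using clo[OF that, of "G 0 0"] by (simp add: Omega_act_oact)
    show "W = {0} \<or> W = UNIV"
    proof (cases "W = {0}")
      case True then show ?thesis by simp
    next
      case False
      then obtain w where w: "w \<in> W" "w \<noteq> 0" using W0 by blast
      obtain w0 w1 where w0: "w0 \<in> W \<inter> Omega_even" and w1: "w1 \<in> W \<inter> Omega_odd" and ws: "w = w0 + w1"
        using grad[OF w(1)] by blast
      have exf: "\<exists>f. (f, 0) \<in> W \<and> f \<noteq> 0"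
      proof (cases "w0 = 0")
        case False
        have e: "snd w0 = 0" using w0 by (simp add: Omega_even_def)
        have "w0 = (fst w0, 0)" using e by (simp add: prod_eq_iff)
        then have "(fst w0, 0) \<in> W" using w0 by (metis IntD1)
        moreover have "fst w0 \<noteq> 0" using False e by (auto simp: prod_eq_iff)
        ultimately show ?thesis by blast
      next
        case True
        then have "w1 \<noteq> 0" using ws w by simp
        then have g0: "snd w1 \<noteq> 0" using w1 by (auto simp: Omega_odd_def prod_eq_iff)
        have "?act (G 0 0) w1 \<in> W" using clo w1 by blast
        moreover have "?act (G 0 0) w1 = ([:0, q:] * snd w1, 0)" using w1 by (simp add: Omega_act_oact Omega_odd_def)
        moreover have "[:0, q:] * snd w1 \<noteq> 0" using q g0 by simp
        ultimately show ?thesis by metis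
      qed
      obtain f0 where f0W: "(f0, 0) \<in> W" and f0nz: "f0 \<noteq> 0"
        and fmin: "\<And>g. (g, 0) \<in> W \<and> g \<noteq> 0 \<Longrightarrow> degree f0 \<le> degree g"
        using ex_has_least_nat[of "\<lambda>f. (f, 0) \<in> W \<and> f \<noteq> 0" _ degree] exf by blast
      have fdvd: "f0 dvd h" if "(h, 0) \<in> W" for h
      proof -
        have "(h - (h div f0) * f0, 0) \<in> W" using Idiff[OF that Imult[OF f0W]] by simp
        then have hm: "(h mod f0, 0) \<in> W" by (simp add: minus_div_mult_eq_mod)
        have "h mod f0 = 0"
        proof (rule ccontr)
          assume nz: "h mod f0 \<noteq> 0"
          then have "degree (h mod f0) < degree f0" using f0nz degree_mod_less by blast
          moreover have "degree f0 \<le> degree (h mod f0)" using fmin hm nz by blast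
          ultimately show False by simp
        qed
        then show ?thesis by (simp add: mod_eq_0_iff_dvd)
      qed
      have dz: "degree f0 = 0"
      proof (rule ccontr)
        assume "degree f0 \<noteq> 0"
        then obtain r where r: "poly f0 r = 0" using root_exists by blast
        have ev: "poly h r = 0" if "(h, 0) \<in> W" for h
          using fdvd[OF that] r by (auto elim: dvdE)
        show False
        proof (cases "a = 0")
          case False
          have "poly [:r, - (q * a):] (of_nat n) * poly f0 (r - of_nat n * q) = 0" for n :: nat
          proof -
            have "?act (L (int n) 0) (f0, 0) \<in> W" using clo f0W by blast
            then have "(OmP q lam a b (int n) 0 * shift (of_int (int n) * q) f0, 0) \<in> W"
              by (simp add: Omega_act_oact)
            from ev[OF this] have "lam ^ n * (r - of_nat n * q * a) * poly f0 (r - of_nat n * q) = 0"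
              by (simp add: OmP_def kd_def algebra_simps)
            then show ?thesis using l0 by (simp add: algebra_simps)
          qed
          moreover have "[:r, - (q * a):] \<noteq> 0" using q False by simp
          ultimately have "f0 = 0" by (rule vanish_lemma[OF q, rotated])
          then show False using f0nz by simp
        next
          case True
          then have b0: "b \<noteq> 0" using ab by simp
          then have qm: "q = -1" using qb by auto
          have "poly 1 (of_nat n) * poly f0 (r - of_nat n * q) = 0" for n :: nat
          proof -
            have "?act (G (int n) 0) (f0, 0) \<in> W" using clo f0W by blast
            then have "(0, [:lam ^ n:] * shift (of_int (int n) * q) f0) \<in> W"
              by (simp add: Omega_act_oact OmA_def OmB_def kd_def)
            then have "?act (G 0 1) (0, [:lam ^ n:] * shift (of_int (int n) * q) f0) \<in> W" using clo by blast
            then have "(smult (q * (2 * b)) ([:lam ^ n:] * shift (of_int (int n) * q) f0), 0) \<in> W"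
              using qm by (simp add: Omega_act_oact OmA_def OmB_def kd_def mult.commute)
            from ev[OF this] have "q * (2 * b) * lam ^ n * poly f0 (r - of_nat n * q) = 0" by simp
            then show ?thesis using q b0 l0 by simp
          qed
          then have "f0 = 0" by (rule vanish_lemma[OF q one_neq_zero[symmetric, THEN not_sym]])
          then show False using f0nz by simp
        qed
      qed
      then obtain k where k: "f0 = [:k:]" by (metis degree_eq_zeroE)
      then have k0: "k \<noteq> 0" using f0nz by simp
      have one: "(1, 0) \<in> W" using Ism[OF f0W, of "1 / k"] k k0 by (simp add: one_pCons)
      have "x \<in> W" for x
      proof -
        have "(fst x, 0) \<in> W" using Imult[OF one, of "fst x"] by simp
        moreover have "(0, snd x) \<in> W" using Iodd Imult[OF one, of "snd x"] by simp
        ultimately have "(fst x, 0) + (0, snd x) \<in> W" by (rule Wadd)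
        then show ?thesis by simp
      qed
      then show ?thesis by blast
    qed
  qed
qed

theorem theorem1p3:
  fixes q lam mu a a' b b' :: complex
  assumes "q \<noteq> 0" and "lam \<noteq> 0" and "mu \<noteq> 0"
    and "q \<noteq> -1 \<longrightarrow> b = 0 \<and> b' = 0"
  shows
    "R_module q Omega_smul Omega_even Omega_odd (Omega_act q lam a b)
     \<and> (R_simple q Omega_smul Omega_even Omega_odd (Omega_act q lam a b) \<longleftrightarrow> a \<noteq> 0 \<or> b \<noteq> 0)
     \<and> (R_isomorphic Omega_smul Omega_even Omega_odd (Omega_act q lam a b)
                     Omega_smul Omega_even Omega_odd (Omega_act q mu a' b')
          \<longleftrightarrow> lam = mu \<and> a = a' \<and> b = b')
     \<and> (\<forall>(smul :: complex \<Rightarrow> 'v::ab_group_add \<Rightarrow> 'v) V0 V1 act.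
          R_module q smul V0 V1 act \<and> U_eta_free_rank1 smul V0 act \<longrightarrow>
          (\<exists>l a0 b0. l \<noteq> 0 \<and> (q \<noteq> -1 \<longrightarrow> b0 = 0) \<and>
             R_isomorphic smul V0 V1 act Omega_smul Omega_even Omega_odd (Omega_act q l a0 b0)))"
proof -
  have qb: "q \<noteq> -1 \<longrightarrow> b = 0" using assms(4) by blast
  show ?thesis
  proof (intro conjI allI impI)
    show "R_module q Omega_smul Omega_even Omega_odd (Omega_act q lam a b)"
      by (rule part1[OF assms(2) qb])
    show "R_simple q Omega_smul Omega_even Omega_odd (Omega_act q lam a b) \<longleftrightarrow> a \<noteq> 0 \<or> b \<noteq> 0"
      by (rule part2[OF assms(1) assms(2) qb])
    show "R_isomorphic Omega_smul Omega_even Omega_odd (Omega_act q lam a b)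
                     Omega_smul Omega_even Omega_odd (Omega_act q mu a' b')
          \<longleftrightarrow> lam = mu \<and> a = a' \<and> b = b'"
      by (rule part3[OF assms])
    fix smul :: "complex \<Rightarrow> 'v::ab_group_add \<Rightarrow> 'v" and V0 V1 act
    assume "R_module q smul V0 V1 act \<and> U_eta_free_rank1 smul V0 act"
    then show "\<exists>l a0 b0. l \<noteq> 0 \<and> (q \<noteq> -1 \<longrightarrow> b0 = 0) \<and>
             R_isomorphic smul V0 V1 act Omega_smul Omega_even Omega_odd (Omega_act q l a0 b0)"
      using part4[OF assms(1)] by blast
  qed
qed

end
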